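(* Let $f\in C^\infty(\mathbb{T})$ be even and nonnegative with $f(0)=0$ and $f'\ge 0$ on $[0,\pi)$. Then for every $a>0$ and $\sigma>0$, \[ -\int_0^{\pi/2}\frac{H_a f(x)\,f'(x)}{x^{\sigma}}\,dx \;\ge\; C_{a,\sigma}\int_0^{\pi/2}\frac{f(x)^2}{x^{1+\sigma}}\,dx, \] where $C_{a,\sigma}>0$ is a constant depending only on $a$ and $\sigma$ (and not on $f$). If the right-hand side is infinite, the statement means that the left-hand side is infinite as well.
   Context: $\mathbb{T}=[-\pi,\pi)$ is the circle; functions on $\mathbb{T}$ are identified with $2\pi$-periodic functions on $\mathbb{R}$, and $C^\infty(\mathbb{T})$ denotes smooth $2\pi$-periodic functions with all derivatives bounded. For $a>0$, $H_a f(x) := \mathrm{P.V.}\int_{\mathbb{R}} f(x-y)K_a(y)\,dy$ with $K_a(y) := \frac{a^2}{\pi y(y^2+a^2)}$, applied to the periodic extension of $f$. *)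

theory Defs
  imports "HOL-Analysis.Analysis"
begin

definition Kker :: "real \<Rightarrow> real \<Rightarrow> real" where
  "Kker a y = a^2 / (pi * y * (y^2 + a^2))"

definition Hop :: "real \<Rightarrow> (real \<Rightarrow> real) \<Rightarrow> real \<Rightarrow> real" where
  "Hop a f x = Lim (at_right 0)
     (\<lambda>eps. integral {y. eps \<le> \<bar>y\<bar>} (\<lambda>y. f (x - y) * Kker a y))"

definition smooth_real :: "(real \<Rightarrow> real) \<Rightarrow> bool" where
  "smooth_real f \<longleftrightarrow> (\<forall>n x. (deriv ^^ n) f differentiable (at x))"

text \<open>Smooth 2pi-periodic functions, i.e. C-infinity of the circle.\<close>
definition smooth_periodic :: "(real \<Rightarrow> real) \<Rightarrow> bool" where
  "smooth_periodic f \<longleftrightarrow> smooth_real f \<and> (\<forall>x. f (x + 2 * pi) = f x)"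

end

theory Submission
  imports Defs "HOL-Probability.Sinc_Integral"
begin

lemma periodic_nat:
  fixes g :: "real \<Rightarrow> 'a"
  assumes "\<And>x. g (x + 2*pi) = g x"
  shows "g (x + 2*pi*real n) = g x" "g (x - 2*pi*real n) = g x"
proof -
  show "g (x + 2*pi*real n) = g x"
  proof (induction n)
    case (Suc n)
    have "g (x + 2*pi*real (Suc n)) = g ((x + 2*pi*real n) + 2*pi)" by (simp add: algebra_simps)
    also have "\<dots> = g x" using assms Suc by simp
    finally show ?case .
  qed simp
  show "g (x - 2*pi*real n) = g x"
  proof (induction n)
    case (Suc n)
    have "g (x - 2*pi*real n) = g ((x - 2*pi*real (Suc n)) + 2*pi)" by (simp add: algebra_simps)
    also have "\<dots> = g (x - 2*pi*real (Suc n))" using assms by simp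
    finally show ?case using Suc by simp
  qed simp
qed

lemma periodic_bounded:
  fixes g :: "real \<Rightarrow> real"
  assumes per: "\<And>x. g (x + 2*pi) = g x" and cont: "continuous_on UNIV g"
  shows "\<exists>M. \<forall>x. \<bar>g x\<bar> \<le> M"
proof -
  have "compact (g ` {0..2*pi})"
    by (intro compact_continuous_image continuous_on_subset[OF cont]) auto
  then obtain M where M: "\<forall>y\<in>g ` {0..2*pi}. \<bar>y\<bar> \<le> M"
    using compact_imp_bounded bounded_real by blast
  have "\<bar>g x\<bar> \<le> M" for x
  proof -
    define n where "n = floor (x / (2*pi))"
    define x' where "x' = x - 2*pi*n"
    have "n \<le> x / (2*pi)" "x / (2*pi) < n + 1" unfolding n_def by linarith+
    hence "2*pi*n \<le> x" "x < 2*pi*n + 2*pi" using pi_gt_zero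
      by (simp_all add: field_simps)
    hence x'r: "x' \<in> {0..2*pi}" unfolding x'_def by auto
    have "g x = g x'"
    proof (cases "n \<ge> 0")
      case True
      have "x = x' + 2*pi*real (nat n)" using True unfolding x'_def by simp
      then show ?thesis using periodic_nat(1)[of g, OF per, of x' "nat n"] by simp
    next
      case False
      have "x = x' - 2*pi*real (nat (-n))" using False unfolding x'_def by simp
      then show ?thesis using periodic_nat(2)[of g, OF per, of x' "nat (-n)"] by simp
    qed
    thus ?thesis using M x'r by auto
  qed
  thus ?thesis by blast
qed

context
  fixes f :: "real \<Rightarrow> real"
  assumes sp: "smooth_periodic f" and ev: "\<forall>x. f (- x) = f x" and nn: "\<forall>x. f x \<ge> 0"
    and f0: "f 0 = 0" and dmono: "\<forall>x\<in>{0..<pi}. deriv f x \<ge> 0"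
begin

lemma f_deriv: "(f has_real_derivative deriv f x) (at x)"
proof -
  have "((deriv ^^ 0) f) differentiable (at x)" using sp unfolding smooth_periodic_def smooth_real_def by blast
  thus ?thesis by (simp add: DERIV_deriv_iff_real_differentiable)
qed

lemma f_cont: "isCont f x"
  using f_deriv DERIV_isCont by blast

lemma f_cont_on: "continuous_on S f"
  using f_cont by (simp add: continuous_at_imp_continuous_on)

lemma df_cont: "isCont (deriv f) x"
proof -
  have "((deriv ^^ 1) f) differentiable (at x)" using sp unfolding smooth_periodic_def smooth_real_def by blast
  thus ?thesis by (simp add: differentiable_imp_continuous_within)
qed

lemma df_cont_on: "continuous_on S (deriv f)"
  using df_cont by (simp add: continuous_at_imp_continuous_on)

lemma f_per: "f (x + 2*pi) = f x"
  using sp unfolding smooth_periodic_def by blast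

lemma df_per: "deriv f (x + 2*pi) = deriv f x"
proof -
  have "((\<lambda>t. f (t + 2*pi)) has_real_derivative deriv f (x + 2*pi)) (at x)"
  proof -
    have "((\<lambda>t. t + 2*pi) has_real_derivative 1) (at x)" by (auto intro!: derivative_eq_intros)
    from DERIV_chain2[OF f_deriv[of "x+2*pi"] this] show ?thesis by simp
  qed
  moreover have "(\<lambda>t. f (t + 2*pi)) = f" using f_per by auto
  ultimately show ?thesis using f_deriv DERIV_unique by metis
qed

lemma f_bound: "\<exists>M. \<forall>x. \<bar>f x\<bar> \<le> M"
  using periodic_bounded[OF f_per f_cont_on] .

lemma df_bound: "\<exists>M. \<forall>x. \<bar>deriv f x\<bar> \<le> M"
  using periodic_bounded[OF df_per df_cont_on] .

lemma f_mono: assumes "0 \<le> s" "s \<le> t" "t \<le> pi" shows "f s \<le> f t"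
  using assms
  by (intro DERIV_nonneg_imp_increasing_open[OF \<open>s \<le> t\<close>] f_cont_on)
     (use f_deriv dmono in force)

lemma f_refl: "f (2*pi - t) = f t"
  using f_per[of "-t"] ev by simp

lemma f_per_minus: "f (x - 2*pi) = f x"
  using f_per[of "x - 2*pi"] by simp

end

lemma Kker_pos: "a > 0 \<Longrightarrow> y > 0 \<Longrightarrow> Kker a y > 0"
  unfolding Kker_def by (auto intro!: divide_pos_pos mult_pos_pos add_pos_nonneg)

lemma Kker_odd: "Kker a (- y) = - Kker a y"
  unfolding Kker_def by (simp add: divide_simps)

lemma Kker_anti: assumes "a > 0" "0 < y" "y \<le> z" shows "Kker a z \<le> Kker a y"
proof -
  have "pi * y * (y^2 + a^2) \<le> pi * z * (z^2 + a^2)"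
    using assms by (intro mult_mono power_mono add_mono) auto
  moreover have "0 < pi * y * (y^2 + a^2)" using assms by (intro mult_pos_pos add_pos_nonneg) auto
  moreover have "0 < pi * z * (z^2 + a^2)" using assms by (intro mult_pos_pos add_pos_nonneg) auto
  ultimately show ?thesis unfolding Kker_def using assms
    by (intro divide_left_mono) auto
qed

lemma Kker_yK: "y \<noteq> 0 \<Longrightarrow> a > 0 \<Longrightarrow> y * Kker a y = a^2 / (pi * (y^2 + a^2))"
proof -
  assume "y \<noteq> 0" "a > 0"
  have "y^2 + a^2 > 0" using \<open>a>0\<close> by (simp add: add_nonneg_pos)
  have "pi*y*(y^2+a^2) = y * (pi*(y^2+a^2))" by simp
  then show ?thesis unfolding Kker_def using \<open>y \<noteq> 0\<close> by simp
qed

lemma Kker_meas[measurable]: "Kker a \<in> borel_measurable borel"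
  unfolding Kker_def by measurable

lemma Kker_key:
  assumes a: "a > 0" and y: "0 < y" "y \<le> x" "x \<le> pi/2"
  shows "Kker a y - Kker a (2*pi - y) \<ge> (a^2 / (2*pi*(4 + a^2))) / x"
proof -
  have x0: "x > 0" using y by simp
  have p4: "pi/2 \<le> 2" "3*pi/2 \<ge> 4" using pi_gt3 pi_less_4 by auto
  have "Kker a x \<le> Kker a y" using Kker_anti[OF a y(1,2)] .
  have xK: "x * Kker a x = a^2 / (pi * (x^2 + a^2))" using Kker_yK[of x a] x0 a by simp
  have "x^2 \<le> 4" proof -
    have "x \<le> 2" using y p4 by linarith
    hence "x * x \<le> 2 * 2" using x0 by (intro mult_mono) auto
    thus ?thesis by (simp add: power2_eq_square)
  qed
  hence "a^2 / (pi * (4 + a^2)) \<le> a^2 / (pi * (x^2 + a^2))"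
    using a x0 by (intro divide_left_mono mult_left_mono) (auto intro!: mult_pos_pos add_nonneg_pos)
  hence "a^2 / (pi * (4 + a^2)) / x \<le> a^2 / (pi * (x^2 + a^2)) / x"
    using x0 by (intro divide_right_mono) auto
  also have "\<dots> = Kker a x" using xK[symmetric] x0 by simp
  finally have lo: "a^2 / (pi * (4 + a^2)) / x \<le> Kker a y" using \<open>Kker a x \<le> Kker a y\<close> by linarith
  have z4: "2*pi - y \<ge> 4" using y p4 by linarith
  have "Kker a (2*pi - y) \<le> Kker a 4" using Kker_anti[OF a _ z4] by simp
  also have "Kker a 4 = a^2 / (pi * 4 * (16 + a^2))" unfolding Kker_def by simp
  also have "\<dots> \<le> a^2 / (2*pi*(4 + a^2)) / x"
  proof -
    have "a^2 / (pi * 4 * (16 + a^2)) \<le> a^2 / (pi * 4 * (4 + a^2))"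
      using a by (intro divide_left_mono mult_left_mono) (auto intro!: mult_pos_pos add_pos_nonneg)
    also have "\<dots> \<le> a^2 / (2*pi*(4 + a^2)) / x"
    proof -
      have d: "2*pi*(4 + a^2)*x \<le> pi * 4 * (4 + a^2)"
      proof -
        have "x \<le> 2" using y p4 by linarith
        hence "x * (4 + a^2) \<le> 2 * (4 + a^2)" by (intro mult_right_mono) auto
        hence "(2*pi) * (x * (4 + a^2)) \<le> (2*pi) * (2 * (4 + a^2))" by (intro mult_left_mono) auto
        thus ?thesis by (simp add: algebra_simps)
      qed
      have "a^2 / (pi * 4 * (4 + a^2)) \<le> a^2 / (2*pi*(4 + a^2)*x)"
        using x0 a by (intro divide_left_mono[OF d]) (auto intro!: mult_pos_pos add_pos_nonneg)
      thus ?thesis by simp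
    qed
    finally show ?thesis .
  qed
  finally have hi: "Kker a (2*pi - y) \<le> a^2 / (2*pi*(4 + a^2)) / x" .
  have "a^2 / (pi * (4 + a^2)) / x = 2 * (a^2 / (2*pi*(4 + a^2)) / x)"
    by (simp add: divide_simps mult.assoc)
  moreover have "\<And>A B t (u::real). u \<le> A \<Longrightarrow> B \<le> t \<Longrightarrow> u = 2*t \<Longrightarrow> t \<le> A - B" by linarith
  ultimately show ?thesis using lo hi by blast
qed


lemma set_integral_affine:
  fixes g :: "real \<Rightarrow> real"
  assumes "c \<noteq> 0"
  shows "(LBINT x:S. g x) = \<bar>c\<bar> * (LBINT x:{x. t + c*x \<in> S}. g (t + c*x))"
  unfolding set_lebesgue_integral_def
  by (subst lborel_integral_real_affine[OF assms, where t=t])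
     (auto intro!: Bochner_Integration.integral_cong split: split_indicator)

lemma integrable_inv1sq: "integrable lborel (\<lambda>y::real. inverse (1 + y^2))"
  using integrable_inverse_1_plus_square by (simp add: set_integrable_def)

lemma inv_sq_bound: "(a::real) > 0 \<Longrightarrow> a^2 / (y^2 + a^2) \<le> max 1 (a^2) * inverse (1 + y^2)"
proof -
  assume a: "a > 0"
  have p1: "y^2 + a^2 > 0" using a by (simp add: add_nonneg_pos)
  have p2: "1 + y^2 > 0" by (simp add: add_pos_nonneg)
  have "a^2 * (1 + y^2) \<le> max 1 (a^2) * (y^2 + a^2)"
  proof (cases "a^2 \<le> 1")
    case True
    then show ?thesis by (simp add: max_def algebra_simps) (metis mult_left_le_one_le zero_le_power2 power2_eq_square True zero_le_square)
  next
    case False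
    then have "a^2 * 1 \<le> a^2 * a^2" by (intro mult_left_mono) auto
    then show ?thesis using False by (simp add: max_def algebra_simps)
  qed
  thus ?thesis using p1 p2 by (simp add: field_simps)
qed

lemma Kker_abs_bound:
  assumes "a > 0" "0 < e" "e \<le> \<bar>y\<bar>"
  shows "\<bar>Kker a y\<bar> \<le> (max 1 (a^2) / (pi * e)) * inverse (1 + y^2)"
proof -
  have y0: "y \<noteq> 0" using assms by auto
  have "\<bar>y\<bar> * \<bar>Kker a y\<bar> = a^2 / (pi * (y^2 + a^2))"
    using Kker_yK[OF y0 assms(1)] by (metis abs_mult abs_of_nonneg assms(1) divide_nonneg_nonneg
        less_imp_le mult_nonneg_nonneg pi_ge_zero zero_le_power2 add_nonneg_nonneg)
  also have "\<dots> \<le> max 1 (a^2) * inverse (1 + y^2) / pi"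
    using divide_right_mono[OF inv_sq_bound[OF assms(1), of y], of pi] by (simp add: mult.commute)
  finally have 1: "\<bar>y\<bar> * \<bar>Kker a y\<bar> \<le> max 1 (a^2) * inverse (1 + y^2) / pi" .
  have "e * \<bar>Kker a y\<bar> \<le> \<bar>y\<bar> * \<bar>Kker a y\<bar>" using assms by (intro mult_right_mono) auto
  with 1 have "e * \<bar>Kker a y\<bar> \<le> max 1 (a^2) * inverse (1 + y^2) / pi" by linarith
  hence "\<bar>Kker a y\<bar> \<le> (max 1 (a^2) * inverse (1 + y^2) / pi) / e"
    using assms by (simp add: pos_le_divide_eq mult.commute)
  moreover have "(max 1 (a^2) * inverse (1 + y^2) / pi) / e = (max 1 (a^2) / (pi * e)) * inverse (1 + y^2)"
    by (simp add: field_simps)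
  ultimately show ?thesis by simp
qed

lemma psi_set_integrable:
  assumes a: "a > 0" and e: "e > 0" and hc: "continuous_on UNIV h" and hM: "\<forall>y. \<bar>h y\<bar> \<le> M"
  shows "set_integrable lborel {y. e \<le> \<bar>y\<bar>} (\<lambda>y. h y * Kker a y)"
proof -
  have hm[measurable]: "h \<in> borel_measurable borel" using borel_measurable_continuous_onI[OF hc] .
  have "set_integrable lborel {y. e \<le> \<bar>y\<bar>} (\<lambda>y. (M * (max 1 (a^2) / (pi * e))) * inverse (1 + y^2))"
    unfolding set_integrable_def
    by (intro integrable_mult_indicator) (auto intro!: integrable_inv1sq)
  moreover have "set_borel_measurable lborel {y. e \<le> \<bar>y\<bar>} (\<lambda>y. h y * Kker a y)"
    unfolding set_borel_measurable_def by measurable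
  moreover have "AE y in lborel. y \<in> {y. e \<le> \<bar>y\<bar>} \<longrightarrow>
      norm (h y * Kker a y) \<le> norm ((M * (max 1 (a^2) / (pi * e))) * inverse (1 + y^2))"
  proof (intro AE_I2 impI)
    fix y assume y: "y \<in> {y. e \<le> \<bar>y\<bar>}"
    have "norm (h y * Kker a y) = \<bar>h y\<bar> * \<bar>Kker a y\<bar>" by (simp add: abs_mult)
    also have "\<dots> \<le> M * ((max 1 (a^2) / (pi * e)) * inverse (1 + y^2))"
      using hM Kker_abs_bound[OF a e, of y] y by (intro mult_mono) auto
    also have "\<dots> \<le> norm ((M * (max 1 (a^2) / (pi * e))) * inverse (1 + y^2))"
      by (metis abs_ge_self mult.assoc real_norm_def)
    finally show "norm (h y * Kker a y) \<le> norm ((M * (max 1 (a^2) / (pi * e))) * inverse (1 + y^2))" .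
  qed
  ultimately show ?thesis by (rule set_integrable_bound)
qed

context
  fixes f :: "real \<Rightarrow> real"
  assumes sp: "smooth_periodic f" and ev: "\<forall>x. f (- x) = f x" and nn: "\<forall>x. f x \<ge> 0"
    and f0: "f 0 = 0" and dmono: "\<forall>x\<in>{0..<pi}. deriv f x \<ge> 0"
begin

lemma f_meas[measurable]: "f \<in> borel_measurable borel"
  using borel_measurable_continuous_onI[OF f_cont_on[OF sp ev nn f0 dmono]] .

lemma Delta_bound:
  assumes a: "a > 0"
  shows "\<exists>Cb. \<forall>y. \<bar>(f (x+y) - f (x-y)) * Kker a y\<bar> \<le> Cb * inverse (1 + y^2)"
proof -
  obtain M where M: "\<forall>t. \<bar>deriv f t\<bar> \<le> M" using df_bound[OF sp ev nn f0 dmono] by blast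
  have "\<bar>(f (x+y) - f (x-y)) * Kker a y\<bar> \<le> (2 * M * max 1 (a^2) / pi) * inverse (1 + y^2)" for y
  proof (cases "y = 0")
    case True then show ?thesis using M[rule_format, of 0] by (simp add: Kker_def)
  next
    case False
    have D: "\<bar>f (x+y) - f (x-y)\<bar> \<le> 2 * M * \<bar>y\<bar>"
    proof -
      have "x - \<bar>y\<bar> < x + \<bar>y\<bar>" using False by simp
      from MVT2[OF this, of f "deriv f"] f_deriv[OF sp ev nn f0 dmono]
      obtain z where "f (x + \<bar>y\<bar>) - f (x - \<bar>y\<bar>) = (x + \<bar>y\<bar> - (x - \<bar>y\<bar>)) * deriv f z" by blast
      hence "\<bar>f (x + \<bar>y\<bar>) - f (x - \<bar>y\<bar>)\<bar> = 2 * \<bar>y\<bar> * \<bar>deriv f z\<bar>" by (simp add: abs_mult)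
      also have "\<dots> \<le> 2 * \<bar>y\<bar> * M" using M by (intro mult_left_mono) auto
      finally have "\<bar>f (x + \<bar>y\<bar>) - f (x - \<bar>y\<bar>)\<bar> \<le> 2 * M * \<bar>y\<bar>" by (simp add: algebra_simps)
      thus ?thesis
      proof (cases "y \<ge> 0")
        case False
        hence "\<bar>y\<bar> = - y" by simp
        thus ?thesis using \<open>\<bar>f (x + \<bar>y\<bar>) - f (x - \<bar>y\<bar>)\<bar> \<le> 2 * M * \<bar>y\<bar>\<close> by (simp add: abs_minus_commute)
      qed simp
    qed
    have "\<bar>y\<bar> * \<bar>Kker a y\<bar> = a^2 / (pi * (y^2 + a^2))"
      using Kker_yK[OF False a] by (metis abs_mult abs_of_nonneg a divide_nonneg_nonneg
        less_imp_le mult_nonneg_nonneg pi_ge_zero zero_le_power2 add_nonneg_nonneg)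
    also have "\<dots> \<le> max 1 (a^2) * inverse (1 + y^2) / pi"
      using divide_right_mono[OF inv_sq_bound[OF a, of y], of pi] by (simp add: mult.commute)
    finally have K: "\<bar>y\<bar> * \<bar>Kker a y\<bar> \<le> max 1 (a^2) * inverse (1 + y^2) / pi" .
    have "\<bar>(f (x+y) - f (x-y)) * Kker a y\<bar> \<le> (2 * M * \<bar>y\<bar>) * \<bar>Kker a y\<bar>"
      unfolding abs_mult by (intro mult_right_mono D) auto
    also have "\<dots> = 2 * M * (\<bar>y\<bar> * \<bar>Kker a y\<bar>)" by simp
    also have "\<dots> \<le> 2 * M * (max 1 (a^2) * inverse (1 + y^2) / pi)"
      using M[rule_format, of 0] by (intro mult_left_mono K) auto
    finally show ?thesis by simp
  qed
  thus ?thesis by blast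
qed

lemma Delta_integrable:
  assumes a: "a > 0"
  shows "integrable lborel (\<lambda>y. (f (x+y) - f (x-y)) * Kker a y)"
proof -
  obtain Cb where Cb: "\<forall>y. \<bar>(f (x+y) - f (x-y)) * Kker a y\<bar> \<le> Cb * inverse (1 + y^2)"
    using Delta_bound[OF a] by blast
  show ?thesis
    by (rule Bochner_Integration.integrable_bound[where f="\<lambda>y. Cb * inverse (1 + y^2)"])
       (use integrable_inv1sq Cb in \<open>auto intro!: AE_I2 intro: order_trans[OF _ abs_ge_self]\<close>)
qed

lemma Hop_eq:
  assumes a: "a > 0"
  shows "Hop a f x = - (LBINT y:{0<..}. (f (x+y) - f (x-y)) * Kker a y)"
proof -
  note fc = f_cont_on[OF sp ev nn f0 dmono]
  obtain M where M: "\<forall>t. \<bar>f t\<bar> \<le> M" using f_bound[OF sp ev nn f0 dmono] by blast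
  define g where "g = (\<lambda>y. (f (x+y) - f (x-y)) * Kker a y)"
  have gi: "integrable lborel g" unfolding g_def using Delta_integrable[OF a] .
  have gsi: "set_integrable lborel A g" if "A \<in> sets lborel" for A
    unfolding set_integrable_def using gi that by (intro integrable_mult_indicator) auto
  define D where "D = (LBINT y:{0<..}. g y)"
  have eq: "integral {y. e \<le> \<bar>y\<bar>} (\<lambda>y. f (x-y) * Kker a y) = - (LBINT y:{e..}. g y)"
    if e: "e > 0" for e
  proof -
    have c1: "continuous_on UNIV (\<lambda>y. f (x - y))"
      by (intro continuous_on_compose2[OF fc, of _ "\<lambda>y. x - y"]) (auto intro!: continuous_intros)
    have c2: "continuous_on UNIV (\<lambda>y. f (x + y))"
      by (intro continuous_on_compose2[OF fc, of _ "\<lambda>y. x + y"]) (auto intro!: continuous_intros)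
    have si1: "set_integrable lborel {y. e \<le> \<bar>y\<bar>} (\<lambda>y. f (x-y) * Kker a y)"
      using psi_set_integrable[OF a e c1, of M] M by auto
    have si2: "set_integrable lborel {y. e \<le> \<bar>y\<bar>} (\<lambda>y. f (x+y) * Kker a y)"
      using psi_set_integrable[OF a e c2, of M] M by auto
    have S: "{y. e \<le> \<bar>y\<bar>} = {e..} \<union> {..-e}" by auto
    have sub1: "{e..} \<subseteq> {y. e \<le> \<bar>y\<bar>}" "{..-e} \<subseteq> {y. e \<le> \<bar>y\<bar>}" by auto
    have "integral {y. e \<le> \<bar>y\<bar>} (\<lambda>y. f (x-y) * Kker a y) = (LBINT y:{y. e \<le> \<bar>y\<bar>}. f (x-y) * Kker a y)"
      using set_borel_integral_eq_integral(2)[OF si1] by simp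
    also have "\<dots> = (LBINT y:{e..}. f (x-y) * Kker a y) + (LBINT y:{..-e}. f (x-y) * Kker a y)"
      unfolding S using e
      by (intro set_integral_Un set_integrable_subset[OF si1]) auto
    also have "(LBINT y:{..-e}. f (x-y) * Kker a y) = (LBINT y:{y. - y \<in> {..-e}}. f (x - - y) * Kker a (- y))"
      by (rule set_integral_reflect)
    also have "{y. - y \<in> {..-e}} = {e..}" by auto
    also have "(LBINT y:{e..}. f (x - - y) * Kker a (- y)) = (LBINT y:{e..}. - (f (x+y) * Kker a y))"
      by (simp add: Kker_odd)
    also have "\<dots> = - (LBINT y:{e..}. f (x+y) * Kker a y)"
      using set_integrable_subset[OF si2 _ sub1(1)] by (intro set_integral_uminus) auto
    also have "(LBINT y:{e..}. f (x-y) * Kker a y) + - (LBINT y:{e..}. f (x+y) * Kker a y)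
        = (LBINT y:{e..}. f (x-y) * Kker a y - f (x+y) * Kker a y)"
      using set_integral_diff(2)[OF set_integrable_subset[OF si1] set_integrable_subset[OF si2]] sub1
      by simp
    also have "\<dots> = (LBINT y:{e..}. - g y)"
      unfolding g_def by (simp add: algebra_simps)
    also have "\<dots> = - (LBINT y:{e..}. g y)"
      by (intro set_integral_uminus gsi) auto
    finally show ?thesis .
  qed
  obtain Cb where Cb: "\<forall>y. \<bar>g y\<bar> \<le> Cb * inverse (1 + y^2)"
    using Delta_bound[OF a] unfolding g_def by blast
  have Cb0: "Cb \<ge> 0" using Cb[rule_format, of 0] by simp
  have gb: "\<bar>g y\<bar> \<le> Cb" for y
  proof -
    have "inverse (1 + y^2) \<le> 1" by (simp add: inverse_le_1_iff)
    hence "Cb * inverse (1 + y^2) \<le> Cb" using Cb0 by (simp add: mult_left_le)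
    thus ?thesis using Cb by (meson order_trans)
  qed
  have diff: "\<bar>D - (LBINT y:{e..}. g y)\<bar> \<le> Cb * e" if e: "e > 0" for e
  proof -
    have U: "{0<..} = {0<..<e} \<union> {e..}" using e by auto
    have "D = (LBINT y:{0<..<e} \<union> {e..}. g y)" unfolding D_def U ..
    also have "\<dots> = (LBINT y:{0<..<e}. g y) + (LBINT y:{e..}. g y)"
      by (rule set_integral_Un) (auto intro!: gsi)
    finally have "D = (LBINT y:{0<..<e}. g y) + (LBINT y:{e..}. g y)" .
    hence dd: "D - (LBINT y:{e..}. g y) = (LBINT y:{0<..<e}. g y)" by simp
    have ci: "set_integrable lborel {0<..<e} (\<lambda>_. c)" for c :: real
    proof -
      have "integrable lborel (indicat_real {0<..<e})"
        by (rule integrable_real_indicator) (use e in \<open>auto simp: emeasure_lborel_Ioo\<close>)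
      thus ?thesis unfolding set_integrable_def by simp
    qed
    have "(LBINT y:{0<..<e}. g y) \<le> (LBINT y:{0<..<e}. Cb)"
      using gb by (intro set_integral_mono gsi ci) (auto simp: abs_le_iff)
    moreover have "(LBINT y:{0<..<e}. - Cb) \<le> (LBINT y:{0<..<e}. g y)"
    proof (intro set_integral_mono gsi ci)
      fix y show "- Cb \<le> g y" using gb[of y] by linarith
    qed auto
    moreover have "(LBINT y:{0<..<e}. Cb) = e * Cb" "(LBINT y:{0<..<e}. - Cb) = - (e * Cb)"
      using e by (simp_all add: set_integral_const)
    ultimately show ?thesis unfolding abs_le_iff dd by (simp add: mult.commute)
  qed
  have "((\<lambda>e. D - (LBINT y:{e..}. g y)) \<longlongrightarrow> 0) (at_right 0)"
  proof (rule Lim_null_comparison)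
    show "\<forall>\<^sub>F e in at_right 0. norm (D - (LBINT y:{e..}. g y)) \<le> Cb * e"
      by (rule eventually_at_rightI[of 0 1]) (use diff in auto)
    show "((\<lambda>e. Cb * e) \<longlongrightarrow> 0) (at_right 0)"
      by (auto intro!: tendsto_eq_intros)
  qed
  hence "((\<lambda>e. D - (D - (LBINT y:{e..}. g y))) \<longlongrightarrow> D - 0) (at_right 0)"
    by (intro tendsto_diff tendsto_const)
  hence "((\<lambda>e. - (LBINT y:{e..}. g y)) \<longlongrightarrow> - D) (at_right 0)"
    by (intro tendsto_minus) simp
  hence "((\<lambda>e. integral {y. e \<le> \<bar>y\<bar>} (\<lambda>y. f (x-y) * Kker a y)) \<longlongrightarrow> - D) (at_right (0::real))"
  proof (rule tendsto_cong[THEN iffD1, rotated])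
    show "\<forall>\<^sub>F e in at_right 0. - (LBINT y:{e..}. g y) = integral {y. e \<le> \<bar>y\<bar>} (\<lambda>y. f (x-y) * Kker a y)"
      by (rule eventually_at_rightI[of 0 1]) (use eq in auto)
  qed
  hence "Hop a f x = - D"
    unfolding Hop_def by (intro tendsto_Lim) auto
  thus ?thesis unfolding D_def g_def .
qed

end

context
  fixes f :: "real \<Rightarrow> real"
  assumes sp: "smooth_periodic f" and ev: "\<forall>x. f (- x) = f x" and nn: "\<forall>x. f x \<ge> 0"
    and f0: "f 0 = 0" and dmono: "\<forall>x\<in>{0..<pi}. deriv f x \<ge> 0"
begin

lemmas fF = f_cont_on[OF sp ev nn f0 dmono] f_per[OF sp ev nn f0 dmono] f_mono[OF sp ev nn f0 dmono]
  f_refl[OF sp ev nn f0 dmono] f_per_minus[OF sp ev nn f0 dmono]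

lemma Delta_per: "f (x + (y + 2*pi*real n)) - f (x - (y + 2*pi*real n)) = f (x + y) - f (x - y)"
proof -
  have "f (x + (y + 2*pi*real n)) = f ((x + y) + 2*pi*real n)" by (simp add: algebra_simps)
  also have "\<dots> = f (x + y)" by (rule periodic_nat(1)[of f, OF fF(2)])
  finally have 1: "f (x + (y + 2*pi*real n)) = f (x + y)" .
  have "f (x - (y + 2*pi*real n)) = f ((x - y) - 2*pi*real n)" by (simp add: algebra_simps)
  also have "\<dots> = f (x - y)" by (rule periodic_nat(2)[of f, OF fF(2)])
  finally show ?thesis using 1 by simp
qed

lemma Delta_nonneg:
  assumes x: "0 < x" "x \<le> pi/2" and y: "0 \<le> y" "y \<le> pi"
  shows "f (x - y) \<le> f (x + y)"
proof (cases "x + y \<le> pi")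
  case True
  have "f (x - y) = f \<bar>x - y\<bar>" using ev by (cases "x - y \<ge> 0") (auto, metis minus_diff_eq)
  also have "\<dots> \<le> f (x + y)" using True x y by (intro fF(3)) auto
  finally show ?thesis .
next
  case False
  have "f (x + y) = f (2*pi - (x + y))" using fF(4)[of "x+y"] by simp
  moreover have "f (x - y) = f \<bar>x - y\<bar>" using ev by (cases "x - y \<ge> 0") (auto, metis minus_diff_eq)
  moreover have "f \<bar>x - y\<bar> \<le> f (2*pi - (x + y))" using False x y by (intro fF(3)) auto
  ultimately show ?thesis by simp
qed

lemma Delta_lower:
  assumes x: "0 < x" "x \<le> pi/2" and y: "0 < y" "y \<le> x"
  shows "f x - f (x - y) \<le> f (x + y) - f (x - y)" "0 \<le> f x - f (x - y)"
proof -
  show "f x - f (x - y) \<le> f (x + y) - f (x - y)" using x y by (simp add: fF(3))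
  show "0 \<le> f x - f (x - y)" using x y fF(3)[of "x-y" x] by simp
qed

context
  fixes a x :: real
  assumes a: "a > 0" and x: "0 < x" "x \<le> pi/2"
begin

definition "gD y = (f (x+y) - f (x-y)) * Kker a y"
definition "JJ k = (LBINT y:{0<..<pi}. (f (x+y) - f (x-y)) * (Kker a (2*pi*real k + y) - Kker a (2*pi*real k + 2*pi - y)))"

lemma gD_int: "integrable lborel gD"
  unfolding gD_def using Delta_integrable[OF sp ev nn f0 dmono a] .

lemma gD_sint: "A \<in> sets lborel \<Longrightarrow> set_integrable lborel A gD"
  unfolding set_integrable_def using gD_int by (intro integrable_mult_indicator) auto

lemma h1_int: "integrable lborel (\<lambda>z. (f (x+z) - f (x-z)) * Kker a (2*pi*real k + z))"
proof -
  have "integrable lborel (\<lambda>z. gD (2*pi*real k + 1 * z))"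
    by (rule lborel_integrable_real_affine[OF gD_int]) simp
  moreover have "gD (2*pi*real k + 1 * z) = (f (x+z) - f (x-z)) * Kker a (2*pi*real k + z)" for z
    unfolding gD_def using Delta_per[of x z k] by (simp add: add.commute)
  ultimately show ?thesis by simp
qed

lemma h2_int: "integrable lborel (\<lambda>z. (f (x+z) - f (x-z)) * Kker a (2*pi*real k + 2*pi - z))"
proof -
  have "integrable lborel (\<lambda>z. - gD ((2*pi*real k + 2*pi) + (-1) * z))"
    by (intro integrable_minus lborel_integrable_real_affine[OF gD_int]) simp
  moreover have eqq: "- gD ((2*pi*real k + 2*pi) + (-1) * z) = (f (x+z) - f (x-z)) * Kker a (2*pi*real k + 2*pi - z)" for z
  proof -
    have "f (x + (2*pi*real k + 2*pi - z)) - f (x - (2*pi*real k + 2*pi - z))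
       = f (x + (- z + 2*pi*real (Suc k))) - f (x - (- z + 2*pi*real (Suc k)))"
      by (simp add: algebra_simps)
    also have "\<dots> = f (x - z) - f (x + z)" using Delta_per[of x "-z" "Suc k"] by simp
    finally have e2: "f (x + (2*pi*real k + 2*pi - z)) - f (x - (2*pi*real k + 2*pi - z)) = f (x - z) - f (x + z)" .
    have e1: "(2*pi*real k + 2*pi) + (-1)*z = 2*pi*real k + 2*pi - z" by simp
    show ?thesis unfolding gD_def e1 e2 by (simp add: algebra_simps)
  qed
  ultimately show ?thesis using eqq by (metis (no_types, lifting) ext)
qed

lemma period_piece:
  "(LBINT y:{2*pi*real k<..2*pi*real k + 2*pi}. gD y) = JJ k"
proof -
  let ?h1 = "\<lambda>z. (f (x+z) - f (x-z)) * Kker a (2*pi*real k + z)"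
  let ?h2 = "\<lambda>z. (f (x+z) - f (x-z)) * Kker a (2*pi*real k + 2*pi - z)"
  have s1: "set_integrable lborel A ?h1" if "A \<in> sets lborel" for A
    unfolding set_integrable_def using h1_int that by (intro integrable_mult_indicator) auto
  have s2: "set_integrable lborel A ?h2" if "A \<in> sets lborel" for A
    unfolding set_integrable_def using h2_int that by (intro integrable_mult_indicator) auto
  have "(LBINT y:{2*pi*real k<..2*pi*real k + 2*pi}. gD y)
      = \<bar>1\<bar> * (LBINT z:{z. 2*pi*real k + 1*z \<in> {2*pi*real k<..2*pi*real k + 2*pi}}. gD (2*pi*real k + 1*z))"
    by (rule set_integral_affine) simp
  also have "{z. 2*pi*real k + 1*z \<in> {2*pi*real k<..2*pi*real k + 2*pi}} = {0<..2*pi}" by auto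
  also have "(\<lambda>z. gD (2*pi*real k + 1*z)) = ?h1"
    unfolding gD_def using Delta_per[of x _ k] by (auto simp: add.commute)
  also have "{0<..2*pi} = {0<..<pi} \<union> {pi..2*pi}" by auto (meson less_le_trans pi_gt_zero)
  also have "(LBINT z:{0<..<pi} \<union> {pi..2*pi}. ?h1 z) = (LBINT z:{0<..<pi}. ?h1 z) + (LBINT z:{pi..2*pi}. ?h1 z)"
    by (rule set_integral_Un) (auto intro!: s1)
  also have "(LBINT z:{pi..2*pi}. ?h1 z) = \<bar>-1\<bar> * (LBINT w:{w. 2*pi + (-1)*w \<in> {pi..2*pi}}. ?h1 (2*pi + (-1)*w))"
    by (rule set_integral_affine) simp
  also have "{w. 2*pi + (-1)*w \<in> {pi..2*pi}} = {0..pi}" by auto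
  also have "(\<lambda>w. ?h1 (2*pi + (-1)*w)) = (\<lambda>w. - ?h2 w)"
  proof
    fix w
    have "f (x + (2*pi + (-1)*w)) - f (x - (2*pi + (-1)*w)) = f (x + (- w + 2*pi*real 1)) - f (x - (- w + 2*pi*real 1))"
      by (simp add: algebra_simps)
    also have "\<dots> = f (x - w) - f (x + w)" using Delta_per[of x "-w" 1] by simp
    finally have e2: "f (x + (2*pi + (-1)*w)) - f (x - (2*pi + (-1)*w)) = f (x - w) - f (x + w)" .
    have e1: "2*pi*real k + (2*pi + (-1)*w) = 2*pi*real k + 2*pi - w" by simp
    show "?h1 (2*pi + (-1)*w) = - ?h2 w" unfolding e1 e2 by (simp add: algebra_simps)
  qed
  also have "(LBINT w:{0..pi}. - ?h2 w) = (LBINT w:{0<..<pi}. - ?h2 w)"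
    by (rule set_integral_discrete_difference[where X="{0, pi}"]) auto
  also have "(LBINT w:{0<..<pi}. - ?h2 w) = - (LBINT w:{0<..<pi}. ?h2 w)"
    by (intro set_integral_uminus s2) auto
  also have "(LBINT z:{0<..<pi}. ?h1 z) + \<bar>-1::real\<bar> * - (LBINT w:{0<..<pi}. ?h2 w)
      = (LBINT z:{0<..<pi}. ?h1 z - ?h2 z)"
    using set_integral_diff(2)[OF s1 s2, of "{0<..<pi}"] by simp
  also have "\<dots> = JJ k" unfolding JJ_def by (simp add: algebra_simps)
  finally show ?thesis by simp
qed

lemma JJ_nonneg: "JJ k \<ge> 0"
proof -
  let ?h = "\<lambda>y. (f (x+y) - f (x-y)) * (Kker a (2*pi*real k + y) - Kker a (2*pi*real k + 2*pi - y))"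
  have hi: "integrable lborel ?h"
    using Bochner_Integration.integrable_diff[OF h1_int[of k] h2_int[of k]] by (simp add: algebra_simps)
  have "(LBINT y:{0<..<pi}. (0::real)) \<le> (LBINT y:{0<..<pi}. ?h y)"
  proof (rule set_integral_mono)
    show "set_integrable lborel {0<..<pi} ?h"
      unfolding set_integrable_def using hi by (intro integrable_mult_indicator) auto
    fix y assume y: "y \<in> {0<..<pi}"
    have d0: "0 \<le> f (x+y) - f (x-y)" using Delta_nonneg[of x y] x y by auto
    have h0: "0 \<le> 2*pi*real k" by simp
    have y': "0 < y" "y < pi" using y by auto
    have "Kker a (2*pi*real k + 2*pi - y) \<le> Kker a (2*pi*real k + y)"
      by (rule Kker_anti[OF a]) (use y' h0 in linarith)+
    then show "0 \<le> ?h y" using d0 by simp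
  qed (simp add: set_integrable_def)
  thus ?thesis unfolding JJ_def by simp
qed

lemma D_ge_JJ0: "(LBINT y:{0<..}. gD y) \<ge> JJ 0"
proof -
  define A where "A N = {0<..2*pi*real N}" for N :: nat
  have incA: "incseq A" unfolding A_def incseq_def
    by (auto simp: subset_eq) (meson mult_le_cancel_left_pos of_nat_le_iff order_trans pi_gt_zero zero_less_numeral mult_pos_pos)
  have UA: "(\<Union>N. A N) = {0<..}"
  proof
    show "{0<..} \<subseteq> (\<Union>N. A N)"
    proof
      fix y :: real assume "y \<in> {0<..}"
      obtain N where "y / (2*pi) \<le> real N" using real_arch_simple by blast
      hence "y \<le> 2*pi*real N" using pi_gt_zero by (simp add: divide_le_eq mult.commute)
      thus "y \<in> (\<Union>N. A N)" using \<open>y \<in> {0<..}\<close> unfolding A_def by auto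
    qed
  qed (auto simp: A_def)
  have lim: "(\<lambda>N. LBINT y:A N. gD y) \<longlonglongrightarrow> (LBINT y:{0<..}. gD y)"
    using set_integral_cont_up[of A lborel gD, OF _ incA] UA gD_sint unfolding A_def by auto
  have step: "(LBINT y:A (Suc N). gD y) = (LBINT y:A N. gD y) + JJ N" for N
  proof -
    have "A (Suc N) = A N \<union> {2*pi*real N<..2*pi*real N + 2*pi}"
    proof -
      have h0: "0 \<le> 2*pi*real N" by simp
      have "2*pi*real (Suc N) = 2*pi*real N + 2*pi" by (simp add: algebra_simps)
      thus ?thesis unfolding A_def set_eq_iff greaterThanAtMost_iff Un_iff using h0 pi_gt_zero by smt
    qed
    hence "(LBINT y:A (Suc N). gD y) = (LBINT y:A N. gD y) + (LBINT y:{2*pi*real N<..2*pi*real N + 2*pi}. gD y)"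
      by (simp, intro set_integral_Un gD_sint) (auto simp: A_def)
    thus ?thesis using period_piece[of N] by simp
  qed
  have "JJ 0 \<le> (LBINT y:A (Suc N). gD y)" for N
  proof (induction N)
    case 0 then show ?case using step[of 0] by (simp add: A_def set_lebesgue_integral_def)
  next
    case (Suc N) then show ?case using step[of "Suc N"] JJ_nonneg[of "Suc N"] by simp
  qed
  hence "\<forall>N\<ge>1. JJ 0 \<le> (LBINT y:A N. gD y)"
  proof (intro allI impI)
    fix N :: nat assume "N \<ge> 1"
    then obtain M where "N = Suc M" using Suc_le_D by (metis One_nat_def)
    thus "JJ 0 \<le> (LBINT y:A N. gD y)" using \<open>\<And>N. JJ 0 \<le> (LBINT y:A (Suc N). gD y)\<close> by simp
  qed
  thus ?thesis by (intro LIMSEQ_le_const[OF lim]) blast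
qed

lemma JJ0_ge: "JJ 0 \<ge> (a^2 / (2*pi*(4 + a^2))) * (f x - integral {0..x} f / x)"
proof -
  define c where "c = a^2 / (2*pi*(4 + a^2))"
  have c0: "c \<ge> 0" unfolding c_def using a by (auto intro!: divide_nonneg_pos add_pos_nonneg)
  let ?h = "\<lambda>y. (f (x+y) - f (x-y)) * (Kker a y - Kker a (2*pi - y))"
  have hi: "integrable lborel ?h"
    using Bochner_Integration.integrable_diff[OF h1_int[of 0] h2_int[of 0]] by (simp add: algebra_simps)
  have hs: "set_integrable lborel A ?h" if "A \<in> sets lborel" for A
    unfolding set_integrable_def using hi that by (intro integrable_mult_indicator) auto
  have J: "JJ 0 = (LBINT y:{0<..<pi}. ?h y)" unfolding JJ_def by simp
  have U: "{0<..<pi} = {0<..x} \<union> {x<..<pi}" using x pi_gt_zero by auto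
  have "(LBINT y:{0<..<pi}. ?h y) = (LBINT y:{0<..x}. ?h y) + (LBINT y:{x<..<pi}. ?h y)"
    unfolding U by (intro set_integral_Un hs) auto
  moreover have "(LBINT y:{x<..<pi}. ?h y) \<ge> 0"
  proof -
    have "(LBINT y:{x<..<pi}. (0::real)) \<le> (LBINT y:{x<..<pi}. ?h y)"
    proof (rule set_integral_mono)
      fix y assume y: "y \<in> {x<..<pi}"
      have "0 \<le> f (x+y) - f (x-y)" using Delta_nonneg[of x y] x y by auto
      moreover have "Kker a (2*pi - y) \<le> Kker a y"
        using y x by (intro Kker_anti[OF a]) auto
      ultimately show "0 \<le> ?h y" by simp
    next
      show "set_integrable lborel {x<..<pi} ?h" by (intro hs) auto
    qed (simp add: set_integrable_def)
    thus ?thesis by simp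
  qed
  ultimately have J1: "JJ 0 \<ge> (LBINT y:{0<..x}. ?h y)" using J by linarith
  have cf: "continuous_on {0..x} (\<lambda>y. (c / x) * (f x - f (x - y)))"
    by (intro continuous_intros continuous_on_compose2[OF fF(1), of _ "\<lambda>y. x - y"]) auto
  have ci: "set_integrable lborel {0<..x} (\<lambda>y. (c / x) * (f x - f (x - y)))"
    by (rule set_integrable_subset[OF borel_integrable_atLeastAtMost'[OF cf]]) auto
  have J2: "(LBINT y:{0<..x}. (c / x) * (f x - f (x - y))) \<le> (LBINT y:{0<..x}. ?h y)"
  proof (rule set_integral_mono[OF ci])
    show "set_integrable lborel {0<..x} ?h" by (intro hs) auto
    fix y assume y: "y \<in> {0<..x}"
    have k: "c / x \<le> Kker a y - Kker a (2*pi - y)"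
      unfolding c_def using Kker_key[OF a, of y x] y x by auto
    have "(c / x) * (f x - f (x - y)) \<le> (Kker a y - Kker a (2*pi - y)) * (f (x+y) - f (x-y))"
    proof -
      have "0 \<le> c / x" using c0 x by simp
      hence "0 \<le> Kker a y - Kker a (2*pi - y)" using k by linarith
      thus ?thesis using Delta_lower[of x y] x y c0 k by (intro mult_mono) auto
    qed
    thus "(c / x) * (f x - f (x - y)) \<le> ?h y" by (simp add: mult.commute)
  qed
  have fi: "set_integrable lborel {0..x} f"
    using borel_integrable_atLeastAtMost'[OF fF(1)] .
  have fxy: "set_integrable lborel {0<..x} (\<lambda>y. f (x - y))"
  proof -
    have "continuous_on {0..x} (\<lambda>y. f (x - y))"
      by (rule continuous_on_compose2[OF fF(1), of _ "\<lambda>y. x - y"]) (auto intro!: continuous_intros)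
    from borel_integrable_atLeastAtMost'[OF this] show ?thesis
      by (rule set_integrable_subset) auto
  qed
  have cst: "set_integrable lborel {0<..x} (\<lambda>y. f x)"
    by (rule set_integrable_subset[OF borel_integrable_atLeastAtMost'[of 0 x "\<lambda>y. f x"]]) auto
  have refl: "(LBINT y:{0<..x}. f (x - y)) = integral {0..x} f"
  proof -
    have "(LBINT z:{0..<x}. f z) = \<bar>-1\<bar> * (LBINT y:{y. x + (-1)*y \<in> {0..<x}}. f (x + (-1)*y))"
      by (rule set_integral_affine) simp
    also have "{y. x + (-1)*y \<in> {0..<x}} = {0<..x}" by auto
    finally have 1: "(LBINT z:{0..<x}. f z) = (LBINT y:{0<..x}. f (x - y))" by simp
    have "(LBINT z:{0..<x}. f z) = (LBINT z:{0..x}. f z)"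
      by (rule set_integral_discrete_difference[where X="{x}"]) auto
    also have "\<dots> = integral {0..x} f" using set_borel_integral_eq_integral(2)[OF fi] .
    finally show ?thesis using 1 by simp
  qed
  have "(LBINT y:{0<..x}. (c / x) * (f x - f (x - y))) = (c / x) * ((LBINT y:{0<..x}. f x) - (LBINT y:{0<..x}. f (x - y)))"
    using set_integral_diff(2)[OF cst fxy] by simp
  also have "(LBINT y:{0<..x}. f x) = x * f x"
    using x by (simp add: set_integral_const)
  finally have "(LBINT y:{0<..x}. (c / x) * (f x - f (x - y))) = c * (f x - integral {0..x} f / x)"
    unfolding refl using x by (simp add: field_simps)
  thus ?thesis using J1 J2 unfolding c_def by linarith
qed

end

lemma neg_Hop_ge:
  assumes a: "a > 0" and x: "0 < x" "x \<le> pi/2"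
  shows "- Hop a f x \<ge> (a^2 / (2*pi*(4 + a^2))) * (f x - integral {0..x} f / x)"
proof -
  have "Hop a f x = - (LBINT y:{0<..}. (f (x+y) - f (x-y)) * Kker a y)"
    by (rule Hop_eq[OF sp ev nn f0 dmono a])
  moreover have "(LBINT y:{0<..}. gD a x y) \<ge> JJ a x 0" by (rule D_ge_JJ0[OF a x])
  moreover have "JJ a x 0 \<ge> (a^2 / (2*pi*(4 + a^2))) * (f x - integral {0..x} f / x)"
    by (rule JJ0_ge[OF a x])
  moreover have "\<And>y. gD a x y = (f (x+y) - f (x-y)) * Kker a y" using gD_def[OF a x] by simp
  ultimately show ?thesis by simp
qed

end

declare f_meas[measurable del]

lemma enn_limit_bound:
  fixes h :: "real \<Rightarrow> real" and N :: ennreal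
  assumes x: "0 < x" and le: "\<And>e. 0 < e \<Longrightarrow> e < x \<Longrightarrow> ennreal r \<le> ennreal (h e) + N"
    and lim: "(h \<longlongrightarrow> 0) (at_right 0)" and hnn: "\<And>e. 0 < e \<Longrightarrow> e < x \<Longrightarrow> h e \<ge> 0"
  shows "ennreal r \<le> N"
proof (cases "N = \<infinity>")
  case True then show ?thesis by simp
next
  case False
  then obtain n where n: "N = ennreal n" "n \<ge> 0" by (cases N) auto
  have "r \<le> h e + n" if "0 < e" "e < x" for e
  proof -
    have "ennreal r \<le> ennreal (h e + n)" using le[OF that] n hnn[OF that] by (simp add: ennreal_plus)
    thus ?thesis by (subst (asm) ennreal_le_iff) (use hnn[OF that] n in auto)
  qed
  hence "r \<le> 0 + n"
    by (intro tendsto_lowerbound[OF tendsto_add[OF lim tendsto_const]] eventually_at_rightI[of 0 x]) (use x in auto)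
  thus ?thesis using n by (simp add: ennreal_leI)
qed

lemma amgm_opt:
  fixes A p q :: real
  assumes A: "A \<ge> 0" and p: "p \<ge> 0" and q: "q > 0"
    and h: "\<And>l. l > 0 \<Longrightarrow> A \<le> l * p / 2 + q / (2 * l)"
  shows "A^2 \<le> q * p"
proof (cases "A = 0")
  case True then show ?thesis using p q by simp
next
  case False
  hence A0: "A > 0" using A by simp
  show ?thesis
  proof (cases "p = 0")
    case True
    have "A \<le> (q / A) * p / 2 + q / (2 * (q / A))" using h[of "q / A"] A0 q by simp
    hence "A \<le> A / 2" using True q by simp
    thus ?thesis using A0 by simp
  next
    case False
    hence p0: "p > 0" using p by simp
    have "A \<le> (A / p) * p / 2 + q / (2 * (A / p))" using h[of "A / p"] A0 p0 by simp
    moreover have "(A / p) * p / 2 = A / 2" using p0 by simp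
    moreover have "q / (2 * (A / p)) = q * p / (2 * A)" using p0 A0 by (simp add: field_simps)
    ultimately have "A \<le> A / 2 + q * p / (2 * A)" by simp
    hence "A / 2 \<le> q * p / (2 * A)" by linarith
    hence "A / 2 * (2 * A) \<le> q * p" using A0 by (simp add: pos_le_divide_eq)
    thus ?thesis by (simp add: power2_eq_square)
  qed
qed

lemma amgm_pq: "l > 0 \<Longrightarrow> (p::real) * q \<le> l * p^2 / 2 + q^2 / (2 * l)"
proof -
  assume l: "l > 0"
  have "0 \<le> (l * p - q)^2" by simp
  hence "2 * l * (p * q) \<le> l^2 * p^2 + q^2" by (simp add: power2_eq_square algebra_simps)
  hence "p * q \<le> (l^2 * p^2 + q^2) / (2 * l)" using l by (simp add: pos_le_divide_eq mult.commute)
  also have "\<dots> = l * p^2 / 2 + q^2 / (2 * l)" using l by (simp add: field_simps power2_eq_square)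
  finally show ?thesis .
qed

lemma pred_tri[measurable]: "Measurable.pred (borel \<Otimes>\<^sub>M borel) (\<lambda>p::real\<times>real. snd p \<in> {0<..fst p})"
  unfolding greaterThanAtMost_iff by measurable

lemma tonelli_tri:
  fixes F G :: "real \<Rightarrow> ennreal" and b :: real
  assumes [measurable]: "F \<in> borel_measurable borel" "G \<in> borel_measurable borel"
  shows "(\<integral>\<^sup>+x. G x * indicator {0<..b} x * (\<integral>\<^sup>+s. F s * indicator {0<..x} s \<partial>lborel) \<partial>lborel)
       \<le> (\<integral>\<^sup>+s. F s * indicator {0<..b} s * (\<integral>\<^sup>+x. G x * indicator {s..b} x \<partial>lborel) \<partial>lborel)"
proof -
  have m: "(\<lambda>(x, s). G x * indicator {0<..b} x * (F s * indicator {0<..x} s)) \<in> borel_measurable (lborel \<Otimes>\<^sub>M lborel)"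
    by measurable
  have "(\<integral>\<^sup>+x. G x * indicator {0<..b} x * (\<integral>\<^sup>+s. F s * indicator {0<..x} s \<partial>lborel) \<partial>lborel)
      = (\<integral>\<^sup>+x. (\<integral>\<^sup>+s. G x * indicator {0<..b} x * (F s * indicator {0<..x} s) \<partial>lborel) \<partial>lborel)"
    by (intro nn_integral_cong nn_integral_cmult[symmetric]) measurable
  also have "\<dots> = (\<integral>\<^sup>+s. (\<integral>\<^sup>+x. G x * indicator {0<..b} x * (F s * indicator {0<..x} s) \<partial>lborel) \<partial>lborel)"
    using lborel_pair.Fubini'[OF m] by simp
  also have "\<dots> \<le> (\<integral>\<^sup>+s. (\<integral>\<^sup>+x. F s * indicator {0<..b} s * (G x * indicator {s..b} x) \<partial>lborel) \<partial>lborel)"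
    by (intro nn_integral_mono) (auto split: split_indicator simp: mult_ac)
  also have "\<dots> = (\<integral>\<^sup>+s. F s * indicator {0<..b} s * (\<integral>\<^sup>+x. G x * indicator {s..b} x \<partial>lborel) \<partial>lborel)"
    by (intro nn_integral_cong nn_integral_cmult) measurable
  finally show ?thesis .
qed


definition Aav :: "(real \<Rightarrow> real) \<Rightarrow> real \<Rightarrow> real" where
  "Aav f s = integral {0..s} f / s"
definition uu :: "(real \<Rightarrow> real) \<Rightarrow> real \<Rightarrow> real" where
  "uu f s = f s - Aav f s"


lemma powr_to_inf_nn:
  assumes s: "s > 0" and e: "e < -1"
  shows "(\<integral>\<^sup>+x. ennreal (x powr e) * indicator {s..b} x \<partial>lborel) \<le> ennreal (- (s powr (e+1)) / (e+1))"
proof -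
  have "(\<integral>\<^sup>+x. ennreal (x powr e) * indicator {s..b} x \<partial>lborel) \<le> (\<integral>\<^sup>+x. ennreal (x powr e) * indicator {s..} x \<partial>lborel)"
    by (intro nn_integral_mono) (auto split: split_indicator)
  also have "\<dots> = ennreal (- (s powr (e+1)) / (e+1))"
    by (rule nn_integral_has_integral_lebesgue'[OF _ has_integral_powr_to_inf[OF e s]]) simp
  finally show ?thesis .
qed

lemma powr_from0_nn:
  assumes x: "x \<ge> 0" and a: "a > -1"
  shows "(\<integral>\<^sup>+t. ennreal (t powr a) * indicator {0<..x} t \<partial>lborel) \<le> ennreal (x powr (a+1) / (a+1))"
proof -
  have "(\<integral>\<^sup>+t. ennreal (t powr a) * indicator {0<..x} t \<partial>lborel) \<le> (\<integral>\<^sup>+t. ennreal (t powr a) * indicator {0..x} t \<partial>lborel)"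
    by (intro nn_integral_mono) (auto split: split_indicator)
  also have "\<dots> = ennreal (x powr (a+1) / (a+1))"
    by (rule nn_integral_has_integral_lebesgue'[OF _ has_integral_powr_from_0[OF a x]]) simp
  finally show ?thesis .
qed

lemma powr_neg1: "(x::real) powr (-1-a) = inverse (x powr (1+a))"
  using powr_minus[of x "1+a"] by simp

lemma sq_powr: "(s::real) > 0 \<Longrightarrow> (s powr a)^2 = s powr (2*a)"
  by (simp add: power2_eq_square powr_add[symmetric])

lemma amgm_powr:
  fixes s l g u :: real
  assumes s: "s > 0" and l: "l > 0" and g: "g > 0"
  shows "u / s \<le> l / 2 * (u^2 * s powr (-1-g)) + 1 / (2 * l) * s powr (g - 1)"
proof -
  define p where "p = u * s powr (-(1+g)/2)"
  define q where "q = s powr ((g-1)/2)"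
  have pq: "p * q = u / s"
  proof -
    have "p * q = u * (s powr (-(1+g)/2) * s powr ((g-1)/2))" unfolding p_def q_def by simp
    also have "s powr (-(1+g)/2) * s powr ((g-1)/2) = s powr (-1)"
      by (simp add: powr_add[symmetric] field_simps)
    finally show ?thesis using s by (simp add: powr_minus_divide)
  qed
  have e1: "2 * (-(1+g)/2) = -1-g" by simp
  have e2: "2 * ((g-1)/2) = g - 1" by simp
  have p2: "p^2 = u^2 * s powr (-1-g)"
    unfolding p_def power_mult_distrib sq_powr[OF s] e1 ..
  have q2: "q^2 = s powr (g - 1)"
    unfolding q_def sq_powr[OF s] e2 ..
  have "p * q \<le> l * p^2 / 2 + q^2 / (2 * l)" by (rule amgm_pq[OF l])
  thus ?thesis unfolding pq p2 q2 by simp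
qed

context
  fixes f f' :: "real \<Rightarrow> real" and b :: real
  assumes fd: "\<And>t. (f has_real_derivative f' t) (at t)" and f'c: "\<And>t. isCont f' t"
    and f0: "f 0 = 0" and fnn: "\<And>t. f t \<ge> 0"
    and fmono: "\<And>s t. 0 \<le> s \<Longrightarrow> s \<le> t \<Longrightarrow> t \<le> b \<Longrightarrow> f s \<le> f t"
    and f'nn: "\<And>t. 0 \<le> t \<Longrightarrow> t \<le> b \<Longrightarrow> f' t \<ge> 0"
begin

lemma H_fc: "continuous_on S f"
  using fd by (meson DERIV_isCont continuous_at_imp_continuous_on)

lemma H_f'c: "continuous_on S f'"
  using f'c by (simp add: continuous_at_imp_continuous_on)

lemma H_Fi_deriv: assumes "0 < s" shows "((\<lambda>s. integral {0..s} f) has_real_derivative f s) (at s)"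
proof -
  have "((\<lambda>s. integral {0..s} f) has_real_derivative f s) (at s within {0..s+1})"
    using assms by (intro integral_has_real_derivative H_fc) auto
  thus ?thesis using at_within_Icc_at[of 0 s "s+1"] assms by simp
qed

lemma H_Fi_eq: "integral {0..s} f = indicator {0<..} s * integral {0..s} f"
proof (cases "s > 0")
  case False
  hence "s < 0 \<or> s = 0" by auto
  thus ?thesis using False by auto
qed simp

lemma H_Fi_meas: "(\<lambda>s. integral {0..s} f) \<in> borel_measurable borel"
proof -
  have "continuous_on {0<..} (\<lambda>s. integral {0..s} f)"
    using H_Fi_deriv by (meson DERIV_isCont continuous_at_imp_continuous_on greaterThan_iff)
  from borel_measurable_continuous_on_indicator[OF _ this]
  have "(\<lambda>s. indicator {0<..} s *\<^sub>R integral {0..s} f) \<in> borel_measurable borel" by simp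
  thus ?thesis by (subst H_Fi_eq) simp
qed

lemma H_f_meas: "f \<in> borel_measurable borel" "f' \<in> borel_measurable borel"
  using borel_measurable_continuous_onI[OF H_fc] borel_measurable_continuous_onI[OF H_f'c] by auto

lemma H_meas: "Aav f \<in> borel_measurable borel" "uu f \<in> borel_measurable borel"
proof -
  note [measurable] = H_Fi_meas H_f_meas
  show "Aav f \<in> borel_measurable borel" unfolding Aav_def by measurable
  then show "uu f \<in> borel_measurable borel" unfolding uu_def by measurable
qed

lemma H_A_bounds: assumes "0 < s" "s \<le> b" shows "0 \<le> Aav f s" "Aav f s \<le> f s"
proof -
  have int: "f integrable_on {0..s}" by (intro integrable_continuous_interval H_fc)
  have "integral {0..s} f \<le> integral {0..s} (\<lambda>_. f s)"
    by (intro integral_le int) (use assms fmono in auto)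
  also have "\<dots> = s * f s" using assms by simp
  finally show "Aav f s \<le> f s" unfolding Aav_def using assms by (simp add: divide_le_eq mult.commute)
  have "0 \<le> integral {0..s} f" by (intro integral_nonneg int) (use fnn in auto)
  thus "0 \<le> Aav f s" unfolding Aav_def using assms by simp
qed

lemma H_u_bounds: assumes "0 < s" "s \<le> b" shows "0 \<le> uu f s" "uu f s \<le> f s"
  using H_A_bounds[OF assms] unfolding uu_def by auto

lemma H_A_deriv: assumes "0 < s" shows "(Aav f has_real_derivative uu f s / s) (at s)"
proof -
  have "((\<lambda>s. integral {0..s} f / s) has_real_derivative (f s * s - integral {0..s} f * 1) / (s * s)) (at s)"
    using assms by (intro DERIV_divide H_Fi_deriv DERIV_ident) auto
  moreover have "(f s * s - integral {0..s} f * 1) / (s * s) = uu f s / s"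
    unfolding uu_def Aav_def using assms by (simp add: field_simps)
  ultimately show ?thesis unfolding Aav_def[abs_def] by simp
qed

lemma H_u_deriv: assumes "0 < s" shows "(uu f has_real_derivative f' s - uu f s / s) (at s)"
  unfolding uu_def[abs_def] using assms by (intro DERIV_diff fd H_A_deriv[unfolded uu_def])

lemma H_u_cont: "0 < s \<Longrightarrow> isCont (uu f) s"
  using H_u_deriv DERIV_isCont by blast
lemma H_A_cont: "0 < s \<Longrightarrow> isCont (Aav f) s"
  using H_A_deriv DERIV_isCont by blast

lemma H_lims: assumes b: "b > 0" shows "(Aav f \<longlongrightarrow> 0) (at_right 0)" "(uu f \<longlongrightarrow> 0) (at_right 0)"
proof -
  have fl: "(f \<longlongrightarrow> 0) (at_right 0)"
    using H_fc[of UNIV] f0 by (metis continuous_on_def UNIV_I filterlim_at_split tendsto_within_subset)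
  have ev: "\<forall>\<^sub>F s in at_right 0. 0 \<le> Aav f s \<and> Aav f s \<le> f s \<and> 0 \<le> uu f s \<and> uu f s \<le> f s"
    by (rule eventually_at_rightI[of 0 b]) (use H_A_bounds H_u_bounds b in auto)
  show "(Aav f \<longlongrightarrow> 0) (at_right 0)"
    by (rule tendsto_sandwich[OF _ _ tendsto_const fl]) (use ev in \<open>auto elim: eventually_mono\<close>)
  show "(uu f \<longlongrightarrow> 0) (at_right 0)"
    by (rule tendsto_sandwich[OF _ _ tendsto_const fl]) (use ev in \<open>auto elim: eventually_mono\<close>)
qed

lemma H5:
  assumes x: "0 < x" "x \<le> b"
  shows "ennreal ((uu f x)^2) \<le> (\<integral>\<^sup>+s. ennreal (2 * uu f s * f' s) * indicator {0<..x} s \<partial>lborel)"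
proof (rule enn_limit_bound[OF x(1), of _ "\<lambda>e. (uu f e)^2"])
  show "((\<lambda>e. (uu f e)^2) \<longlongrightarrow> 0) (at_right 0)"
    using tendsto_power[OF H_lims(2)[OF order.strict_trans2[OF x]], of 2] by simp
  show "0 \<le> (uu f e)^2" for e by simp
  fix e assume e: "0 < e" "e < x"
  let ?g = "\<lambda>s. 2 * uu f s * f' s"
  have gc: "continuous_on {e..x} ?g"
    using e by (intro continuous_intros H_f'c continuous_at_imp_continuous_on) (auto intro!: H_u_cont)
  have gnn: "\<And>s. s \<in> {e..x} \<Longrightarrow> 0 \<le> ?g s"
    using e x H_u_bounds f'nn by (auto intro!: mult_nonneg_nonneg)
  define I where "I = integral {e..x} ?g"
  have gi: "(?g has_integral I) {e..x}" unfolding I_def using gc by (intro integrable_integral integrable_continuous_interval)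
  have step: "(uu f x)^2 \<le> (uu f e)^2 + I"
  proof -
    define \<Phi> where "\<Phi> s = integral {e..s} ?g - (uu f s)^2" for s
    have "\<Phi> e \<le> \<Phi> x"
    proof (rule DERIV_nonneg_imp_increasing_open[of e x \<Phi>])
      show "e \<le> x" using e by simp
      show "continuous_on {e..x} \<Phi>" unfolding \<Phi>_def
        using e by (intro continuous_intros indefinite_integral_continuous_1 integrable_continuous_interval gc
             continuous_at_imp_continuous_on) (auto intro!: H_u_cont)
      fix s assume s: "e < s" "s < x"
      have d1: "((\<lambda>s. integral {e..s} ?g) has_real_derivative ?g s) (at s)"
        using integral_has_real_derivative[OF gc, of s] at_within_Icc_at[of e s x] s by simp
      have d2: "((\<lambda>s. (uu f s)^2) has_real_derivative 2 * uu f s * (f' s - uu f s / s)) (at s)"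
        using DERIV_power[OF H_u_deriv[of s], of 2] s e by (simp add: mult_ac)
      have "(\<Phi> has_real_derivative ?g s - 2 * uu f s * (f' s - uu f s / s)) (at s)"
        unfolding \<Phi>_def[abs_def] by (intro DERIV_diff d1 d2)
      moreover have "?g s - 2 * uu f s * (f' s - uu f s / s) = 2 * (uu f s)^2 / s"
        by (simp add: algebra_simps power2_eq_square)
      moreover have "0 \<le> 2 * (uu f s)^2 / s" using s e by simp
      ultimately show "\<exists>y. (\<Phi> has_real_derivative y) (at s) \<and> 0 \<le> y" by metis
    qed
    thus ?thesis unfolding \<Phi>_def I_def by simp
  qed
  have I0: "I \<ge> 0" unfolding I_def by (intro integral_nonneg integrable_continuous_interval gc gnn)
  have "ennreal ((uu f x)^2) \<le> ennreal ((uu f e)^2 + I)" using step by (intro ennreal_leI)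
  also have "\<dots> = ennreal ((uu f e)^2) + ennreal I" using I0 by (simp add: ennreal_plus)
  also have "ennreal I = (\<integral>\<^sup>+s. ennreal (?g s) * indicator {e..x} s \<partial>lborel)"
    using nn_integral_has_integral_lebesgue'[OF gnn gi] by simp
  also have "\<dots> \<le> (\<integral>\<^sup>+s. ennreal (?g s) * indicator {0<..x} s \<partial>lborel)"
    using e by (intro nn_integral_mono) (auto split: split_indicator)
  finally show "ennreal ((uu f x)^2) \<le> ennreal ((uu f e)^2) + (\<integral>\<^sup>+s. ennreal (?g s) * indicator {0<..x} s \<partial>lborel)"
    by simp
qed

lemma H2:
  assumes x: "0 < x" "x \<le> b"
  shows "ennreal (Aav f x) \<le> (\<integral>\<^sup>+s. ennreal (uu f s / s) * indicator {0<..x} s \<partial>lborel)"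
proof (rule enn_limit_bound[OF x(1), of _ "Aav f"])
  show "(Aav f \<longlongrightarrow> 0) (at_right 0)" using H_lims(1)[OF order.strict_trans2[OF x]] .
  show "0 \<le> Aav f e" if "0 < e" "e < x" for e using H_A_bounds[of e] that x by simp
  fix e assume e: "0 < e" "e < x"
  let ?g = "\<lambda>s. uu f s / s"
  have gnn: "\<And>s. s \<in> {e..x} \<Longrightarrow> 0 \<le> ?g s"
    using e x H_u_bounds by auto
  have gi: "(?g has_integral (Aav f x - Aav f e)) {e..x}"
  proof (rule fundamental_theorem_of_calculus)
    show "e \<le> x" using e by simp
    fix s assume "s \<in> {e..x}"
    hence "0 < s" using e by auto
    from H_A_deriv[OF this] show "(Aav f has_vector_derivative ?g s) (at s within {e..x})"
      by (simp add: has_real_derivative_iff_has_vector_derivative[symmetric] has_field_derivative_at_within)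
  qed
  have I0: "Aav f x - Aav f e \<ge> 0"
    using has_integral_nonneg[OF gi gnn] by simp
  have "ennreal (Aav f x) = ennreal (Aav f e + (Aav f x - Aav f e))" by simp
  also have "\<dots> = ennreal (Aav f e) + ennreal (Aav f x - Aav f e)"
    using I0 H_A_bounds[of e] e x by (intro ennreal_plus) auto
  also have "ennreal (Aav f x - Aav f e) = (\<integral>\<^sup>+s. ennreal (?g s) * indicator {e..x} s \<partial>lborel)"
    using nn_integral_has_integral_lebesgue'[OF gnn gi] by simp
  also have "\<dots> \<le> (\<integral>\<^sup>+s. ennreal (?g s) * indicator {0<..x} s \<partial>lborel)"
    using e by (intro nn_integral_mono) (auto split: split_indicator)
  finally show "ennreal (Aav f x) \<le> ennreal (Aav f e) + (\<integral>\<^sup>+s. ennreal (?g s) * indicator {0<..x} s \<partial>lborel)"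
    by simp
qed

lemma H3:
  assumes x: "0 < x" "x \<le> b" and g: "g > 0"
  shows "ennreal ((Aav f x)^2) \<le> ennreal (x powr g / g) *
           (\<integral>\<^sup>+s. ennreal ((uu f s)^2 * s powr (-1-g)) * indicator {0<..x} s \<partial>lborel)"
    (is "_ \<le> _ * ?P")
proof -
  note [measurable] = H_meas H_f_meas
  let ?Q = "(\<integral>\<^sup>+s. ennreal (s powr (g - 1)) * indicator {0<..x} s \<partial>lborel)"
  have Q: "?Q \<le> ennreal (x powr g / g)"
    using powr_from0_nn[of x "g - 1"] x g by simp
  have q0: "x powr g / g > 0" using x g by simp
  have main: "ennreal (Aav f x) \<le> ennreal (l / 2) * ?P + ennreal (1 / (2 * l)) * ennreal (x powr g / g)"
    if l: "l > 0" for l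
  proof -
    have "ennreal (Aav f x) \<le> (\<integral>\<^sup>+s. ennreal (uu f s / s) * indicator {0<..x} s \<partial>lborel)"
      by (rule H2[OF x])
    also have "\<dots> \<le> (\<integral>\<^sup>+s. ennreal (l / 2) * (ennreal ((uu f s)^2 * s powr (-1-g)) * indicator {0<..x} s)
                  + ennreal (1 / (2 * l)) * (ennreal (s powr (g - 1)) * indicator {0<..x} s) \<partial>lborel)"
    proof (intro nn_integral_mono)
      fix s
      show "ennreal (uu f s / s) * indicator {0<..x} s \<le> ennreal (l / 2) * (ennreal ((uu f s)^2 * s powr (-1-g)) * indicator {0<..x} s)
                  + ennreal (1 / (2 * l)) * (ennreal (s powr (g - 1)) * indicator {0<..x} s)"
      proof (cases "s \<in> {0<..x}")
        case True
        hence s0: "s > 0" by simp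
        have "ennreal (uu f s / s) \<le> ennreal (l / 2 * ((uu f s)^2 * s powr (-1-g)) + 1 / (2 * l) * s powr (g - 1))"
          by (intro ennreal_leI amgm_powr s0 l g)
        also have "\<dots> = ennreal (l / 2) * ennreal ((uu f s)^2 * s powr (-1-g)) + ennreal (1 / (2 * l)) * ennreal (s powr (g - 1))"
        proof -
          have n1: "0 \<le> l / 2 * ((uu f s)^2 * s powr (-1-g))" using l by simp
          have n2: "0 \<le> 1 / (2 * l) * s powr (g - 1)" using l by simp
          have "ennreal (l / 2 * ((uu f s)^2 * s powr (-1-g)) + 1 / (2 * l) * s powr (g - 1))
              = ennreal (l / 2 * ((uu f s)^2 * s powr (-1-g))) + ennreal (1 / (2 * l) * s powr (g - 1))"
            by (rule ennreal_plus[OF n1 n2])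
          also have "ennreal (l / 2 * ((uu f s)^2 * s powr (-1-g))) = ennreal (l / 2) * ennreal ((uu f s)^2 * s powr (-1-g))"
            by (rule ennreal_mult) (use l in auto)
          also have "ennreal (1 / (2 * l) * s powr (g - 1)) = ennreal (1 / (2 * l)) * ennreal (s powr (g - 1))"
            by (rule ennreal_mult) (use l in auto)
          finally show ?thesis .
        qed
        finally show ?thesis using True by simp
      qed simp
    qed
    also have "\<dots> = ennreal (l / 2) * ?P + ennreal (1 / (2 * l)) * ?Q"
      by (subst nn_integral_add) (auto simp: nn_integral_cmult)
    also have "\<dots> \<le> ennreal (l / 2) * ?P + ennreal (1 / (2 * l)) * ennreal (x powr g / g)"
      by (intro add_mono mult_left_mono Q) auto
    finally show ?thesis .
  qed
  show ?thesis
  proof (cases "?P = \<infinity>")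
    case True
    then show ?thesis using q0 x g by (simp add: ennreal_mult_top)
  next
    case False
    then obtain p where p: "?P = ennreal p" "p \<ge> 0" by (cases ?P) auto
    have A0: "Aav f x \<ge> 0" using H_A_bounds[OF x] by simp
    have "(Aav f x)^2 \<le> (x powr g / g) * p"
    proof (rule amgm_opt[OF A0 p(2) q0])
      fix l :: real assume l: "l > 0"
      have nq: "0 \<le> (x powr g / g) / (2 * l)" by (rule divide_nonneg_pos) (use q0 l in auto)
      have "ennreal (Aav f x) \<le> ennreal (l / 2) * ennreal p + ennreal (1 / (2 * l)) * ennreal (x powr g / g)"
        using main[OF l] p by simp
      also have "ennreal (l / 2) * ennreal p = ennreal (l * p / 2)"
        by (subst ennreal_mult[symmetric]) (use l p in auto)
      also have "ennreal (1 / (2 * l)) * ennreal (x powr g / g) = ennreal ((x powr g / g) / (2 * l))"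
        by (subst ennreal_mult[symmetric]) (use l q0 in \<open>auto simp: mult_ac\<close>)
      also have "ennreal (l * p / 2) + ennreal ((x powr g / g) / (2 * l)) = ennreal (l * p / 2 + (x powr g / g) / (2 * l))"
        by (rule ennreal_plus[symmetric]) (use l p nq in auto)
      finally have "ennreal (Aav f x) \<le> ennreal (l * p / 2 + (x powr g / g) / (2 * l))" .
      moreover have "0 \<le> l * p / 2 + (x powr g / g) / (2 * l)" using l p nq by simp
      ultimately show "Aav f x \<le> l * p / 2 + (x powr g / g) / (2 * l)"
        by (subst (asm) ennreal_le_iff) auto
    qed
    hence "ennreal ((Aav f x)^2) \<le> ennreal ((x powr g / g) * p)" by (rule ennreal_leI)
    also have "\<dots> = ennreal (x powr g / g) * ennreal p" by (rule ennreal_mult) (use p q0 in auto)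
    finally show ?thesis using p by simp
  qed
qed

lemma U_bound:
  assumes sg: "\<sigma> > 0"
  shows "(\<integral>\<^sup>+x. ennreal ((uu f x)^2 / x powr (1+\<sigma>)) * indicator {0<..b} x \<partial>lborel)
    \<le> ennreal (2/\<sigma>) * (\<integral>\<^sup>+x. ennreal (uu f x * f' x / x powr \<sigma>) * indicator {0<..b} x \<partial>lborel)"
proof -
  note [measurable] = H_meas H_f_meas
  let ?F = "\<lambda>s. ennreal (2 * uu f s * f' s)"
  let ?G = "\<lambda>x. ennreal (x powr (-1-\<sigma>))"
  have "(\<integral>\<^sup>+x. ennreal ((uu f x)^2 / x powr (1+\<sigma>)) * indicator {0<..b} x \<partial>lborel)
      \<le> (\<integral>\<^sup>+x. ?G x * indicator {0<..b} x * (\<integral>\<^sup>+s. ?F s * indicator {0<..x} s \<partial>lborel) \<partial>lborel)"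
  proof (intro nn_integral_mono)
    fix x show "ennreal ((uu f x)^2 / x powr (1+\<sigma>)) * indicator {0<..b} x
      \<le> ?G x * indicator {0<..b} x * (\<integral>\<^sup>+s. ?F s * indicator {0<..x} s \<partial>lborel)"
    proof (cases "x \<in> {0<..b}")
      case True
      hence x: "0 < x" "x \<le> b" by auto
      have "(uu f x)^2 / x powr (1+\<sigma>) = x powr (-1-\<sigma>) * (uu f x)^2"
        using x by (simp add: powr_neg1 divide_inverse mult.commute)
      hence "ennreal ((uu f x)^2 / x powr (1+\<sigma>)) = ?G x * ennreal ((uu f x)^2)"
        by (simp add: ennreal_mult)
      also have "\<dots> \<le> ?G x * (\<integral>\<^sup>+s. ?F s * indicator {0<..x} s \<partial>lborel)"
        by (intro mult_left_mono H5[OF x]) auto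
      finally show ?thesis using True by simp
    qed simp
  qed
  also have "\<dots> \<le> (\<integral>\<^sup>+s. ?F s * indicator {0<..b} s * (\<integral>\<^sup>+x. ?G x * indicator {s..b} x \<partial>lborel) \<partial>lborel)"
    by (rule tonelli_tri) measurable
  also have "\<dots> \<le> (\<integral>\<^sup>+s. ennreal (2/\<sigma>) * (ennreal (uu f s * f' s / s powr \<sigma>) * indicator {0<..b} s) \<partial>lborel)"
  proof (intro nn_integral_mono)
    fix s show "?F s * indicator {0<..b} s * (\<integral>\<^sup>+x. ?G x * indicator {s..b} x \<partial>lborel)
        \<le> ennreal (2/\<sigma>) * (ennreal (uu f s * f' s / s powr \<sigma>) * indicator {0<..b} s)"
    proof (cases "s \<in> {0<..b}")
      case True
      hence s: "0 < s" "s \<le> b" by auto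
      have nn: "0 \<le> uu f s * f' s" using H_u_bounds[OF s] f'nn[of s] s by simp
      have "(\<integral>\<^sup>+x. ?G x * indicator {s..b} x \<partial>lborel) \<le> ennreal (- (s powr (-1-\<sigma>+1)) / (-1-\<sigma>+1))"
        by (rule powr_to_inf_nn[OF s(1)]) (use sg in simp)
      also have "- (s powr (-1-\<sigma>+1)) / (-1-\<sigma>+1) = s powr (-\<sigma>) / \<sigma>" by simp
      finally have i: "(\<integral>\<^sup>+x. ?G x * indicator {s..b} x \<partial>lborel) \<le> ennreal (s powr (-\<sigma>) / \<sigma>)" .
      have "?F s * (\<integral>\<^sup>+x. ?G x * indicator {s..b} x \<partial>lborel) \<le> ?F s * ennreal (s powr (-\<sigma>) / \<sigma>)"
        by (intro mult_left_mono i) auto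
      also have "\<dots> = ennreal (2 * uu f s * f' s * (s powr (-\<sigma>) / \<sigma>))"
        by (rule ennreal_mult[symmetric]) (use nn sg in \<open>auto simp: mult_ac\<close>)
      also have "2 * uu f s * f' s * (s powr (-\<sigma>) / \<sigma>) = 2/\<sigma> * (uu f s * f' s / s powr \<sigma>)"
        using s by (simp add: powr_minus divide_inverse)
      also have "ennreal \<dots> = ennreal (2/\<sigma>) * ennreal (uu f s * f' s / s powr \<sigma>)"
        by (rule ennreal_mult) (use nn sg in auto)
      finally show ?thesis using True by (simp add: mult_ac)
    qed simp
  qed
  also have "\<dots> = ennreal (2/\<sigma>) * (\<integral>\<^sup>+x. ennreal (uu f x * f' x / x powr \<sigma>) * indicator {0<..b} x \<partial>lborel)"
    by (rule nn_integral_cmult) measurable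
  finally show ?thesis .
qed

lemma AA_bound:
  assumes sg: "\<sigma> > 0"
  shows "(\<integral>\<^sup>+x. ennreal ((Aav f x)^2 / x powr (1+\<sigma>)) * indicator {0<..b} x \<partial>lborel)
    \<le> ennreal (4/\<sigma>^2) * (\<integral>\<^sup>+x. ennreal ((uu f x)^2 / x powr (1+\<sigma>)) * indicator {0<..b} x \<partial>lborel)"
proof -
  note [measurable] = H_meas H_f_meas
  define g where "g = \<sigma> / 2"
  have g0: "g > 0" unfolding g_def using sg by simp
  let ?F = "\<lambda>s. ennreal ((uu f s)^2 * s powr (-1-g))"
  let ?G = "\<lambda>x. ennreal (x powr (-1-g) / g)"
  have "(\<integral>\<^sup>+x. ennreal ((Aav f x)^2 / x powr (1+\<sigma>)) * indicator {0<..b} x \<partial>lborel)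
      \<le> (\<integral>\<^sup>+x. ?G x * indicator {0<..b} x * (\<integral>\<^sup>+s. ?F s * indicator {0<..x} s \<partial>lborel) \<partial>lborel)"
  proof (intro nn_integral_mono)
    fix x show "ennreal ((Aav f x)^2 / x powr (1+\<sigma>)) * indicator {0<..b} x
      \<le> ?G x * indicator {0<..b} x * (\<integral>\<^sup>+s. ?F s * indicator {0<..x} s \<partial>lborel)"
    proof (cases "x \<in> {0<..b}")
      case True
      hence x: "0 < x" "x \<le> b" by auto
      have "(Aav f x)^2 / x powr (1+\<sigma>) = x powr (-1-\<sigma>) * (Aav f x)^2"
        using x by (simp add: powr_neg1 divide_inverse mult.commute)
      hence "ennreal ((Aav f x)^2 / x powr (1+\<sigma>)) = ennreal (x powr (-1-\<sigma>)) * ennreal ((Aav f x)^2)"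
        by (simp add: ennreal_mult)
      also have "\<dots> \<le> ennreal (x powr (-1-\<sigma>)) * (ennreal (x powr g / g) * (\<integral>\<^sup>+s. ?F s * indicator {0<..x} s \<partial>lborel))"
        by (intro mult_left_mono H3[OF x g0]) auto
      also have "\<dots> = (ennreal (x powr (-1-\<sigma>)) * ennreal (x powr g / g)) * (\<integral>\<^sup>+s. ?F s * indicator {0<..x} s \<partial>lborel)"
        by (simp only: mult.assoc)
      also have "ennreal (x powr (-1-\<sigma>)) * ennreal (x powr g / g) = ?G x"
      proof -
        have e: "-1-\<sigma>+g = -1-g" unfolding g_def by simp
        have "x powr (-1-\<sigma>) * x powr g = x powr (-1-g)"
          by (simp only: powr_add[symmetric] e)
        hence h1: "x powr (-1-\<sigma>) * (x powr g / g) = x powr (-1-g) / g"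
          by (metis times_divide_eq_right)
        have h2: "ennreal (x powr (-1-\<sigma>)) * ennreal (x powr g / g) = ennreal (x powr (-1-\<sigma>) * (x powr g / g))"
          by (rule ennreal_mult[symmetric]) (use g0 in auto)
        show ?thesis by (simp only: h1 h2)
      qed
      finally show ?thesis using True by (simp add: mult.assoc)
    qed simp
  qed
  also have "\<dots> \<le> (\<integral>\<^sup>+s. ?F s * indicator {0<..b} s * (\<integral>\<^sup>+x. ?G x * indicator {s..b} x \<partial>lborel) \<partial>lborel)"
    by (rule tonelli_tri) measurable
  also have "\<dots> \<le> (\<integral>\<^sup>+s. ennreal (4/\<sigma>^2) * (ennreal ((uu f s)^2 / s powr (1+\<sigma>)) * indicator {0<..b} s) \<partial>lborel)"
  proof (intro nn_integral_mono)
    fix s show "?F s * indicator {0<..b} s * (\<integral>\<^sup>+x. ?G x * indicator {s..b} x \<partial>lborel)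
        \<le> ennreal (4/\<sigma>^2) * (ennreal ((uu f s)^2 / s powr (1+\<sigma>)) * indicator {0<..b} s)"
    proof (cases "s \<in> {0<..b}")
      case True
      hence s: "0 < s" "s \<le> b" by auto
      have "(\<integral>\<^sup>+x. ?G x * indicator {s..b} x \<partial>lborel) = (\<integral>\<^sup>+x. ennreal (1/g) * (ennreal (x powr (-1-g)) * indicator {s..b} x) \<partial>lborel)"
      proof (intro nn_integral_cong)
        fix x
        have "ennreal (x powr (-1-g) / g) = ennreal (1/g) * ennreal (x powr (-1-g))"
          by (subst ennreal_mult[symmetric]) (use g0 in auto)
        thus "?G x * indicator {s..b} x = ennreal (1/g) * (ennreal (x powr (-1-g)) * indicator {s..b} x)"
          by (simp only: mult.assoc)
      qed
      also have "\<dots> = ennreal (1/g) * (\<integral>\<^sup>+x. ennreal (x powr (-1-g)) * indicator {s..b} x \<partial>lborel)"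
        by (rule nn_integral_cmult) measurable
      also have "\<dots> \<le> ennreal (1/g) * ennreal (- (s powr (-1-g+1)) / (-1-g+1))"
        by (intro mult_left_mono powr_to_inf_nn[OF s(1)]) (use g0 in auto)
      also have "- (s powr (-1-g+1)) / (-1-g+1) = s powr (-g) / g" by simp
      finally have i: "(\<integral>\<^sup>+x. ?G x * indicator {s..b} x \<partial>lborel) \<le> ennreal (1/g) * ennreal (s powr (-g) / g)" .
      have "?F s * (\<integral>\<^sup>+x. ?G x * indicator {s..b} x \<partial>lborel) \<le> ?F s * (ennreal (1/g) * ennreal (s powr (-g) / g))"
        by (intro mult_left_mono i) auto
      also have "\<dots> = ennreal ((uu f s)^2 * s powr (-1-g) * (1/g * (s powr (-g) / g)))"
        using g0 by (simp add: ennreal_mult[symmetric])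
      also have "(uu f s)^2 * s powr (-1-g) * (1/g * (s powr (-g) / g)) = 4/\<sigma>^2 * ((uu f s)^2 / s powr (1+\<sigma>))"
      proof -
        have e: "-1-g+(-g) = -1-\<sigma>" unfolding g_def by simp
        have "s powr (-1-g) * s powr (-g) = s powr (-1-\<sigma>)"
          by (simp only: powr_add[symmetric] e)
        hence "(uu f s)^2 * s powr (-1-g) * (1/g * (s powr (-g) / g)) = (uu f s)^2 * s powr (-1-\<sigma>) / g^2"
          by (simp add: field_simps power2_eq_square)
        also have "\<dots> = 4/\<sigma>^2 * ((uu f s)^2 / s powr (1+\<sigma>))"
          unfolding g_def powr_neg1 by (simp add: field_simps power2_eq_square)
        finally show ?thesis .
      qed
      also have "ennreal \<dots> = ennreal (4/\<sigma>^2) * ennreal ((uu f s)^2 / s powr (1+\<sigma>))"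
        by (rule ennreal_mult) auto
      finally show ?thesis using True by (simp add: mult_ac)
    qed simp
  qed
  also have "\<dots> = ennreal (4/\<sigma>^2) * (\<integral>\<^sup>+x. ennreal ((uu f x)^2 / x powr (1+\<sigma>)) * indicator {0<..b} x \<partial>lborel)"
    by (rule nn_integral_cmult) measurable
  finally show ?thesis .
qed

lemma R_bound:
  "(\<integral>\<^sup>+x. ennreal ((f x)^2 / x powr (1+\<sigma>)) * indicator {0<..b} x \<partial>lborel)
    \<le> 2 * (\<integral>\<^sup>+x. ennreal ((Aav f x)^2 / x powr (1+\<sigma>)) * indicator {0<..b} x \<partial>lborel)
      + 2 * (\<integral>\<^sup>+x. ennreal ((uu f x)^2 / x powr (1+\<sigma>)) * indicator {0<..b} x \<partial>lborel)"
proof -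
  note [measurable] = H_meas H_f_meas
  have "(\<integral>\<^sup>+x. ennreal ((f x)^2 / x powr (1+\<sigma>)) * indicator {0<..b} x \<partial>lborel)
     \<le> (\<integral>\<^sup>+x. 2 * (ennreal ((Aav f x)^2 / x powr (1+\<sigma>)) * indicator {0<..b} x)
          + 2 * (ennreal ((uu f x)^2 / x powr (1+\<sigma>)) * indicator {0<..b} x) \<partial>lborel)"
  proof (intro nn_integral_mono)
    fix x
    have "(f x)^2 / x powr (1+\<sigma>) \<le> 2 * ((Aav f x)^2 / x powr (1+\<sigma>)) + 2 * ((uu f x)^2 / x powr (1+\<sigma>))"
    proof -
      have fx: "f x = Aav f x + uu f x" unfolding uu_def by simp
      have "(f x)^2 \<le> 2 * (Aav f x)^2 + 2 * (uu f x)^2"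
        unfolding fx using sum_squares_ge_zero[of "Aav f x - uu f x" 0] 
        by (simp add: power2_eq_square algebra_simps)
      hence "(f x)^2 / x powr (1+\<sigma>) \<le> (2 * (Aav f x)^2 + 2 * (uu f x)^2) / x powr (1+\<sigma>)"
        by (intro divide_right_mono) auto
      thus ?thesis by (simp add: add_divide_distrib)
    qed
    hence "ennreal ((f x)^2 / x powr (1+\<sigma>)) \<le> ennreal (2 * ((Aav f x)^2 / x powr (1+\<sigma>)) + 2 * ((uu f x)^2 / x powr (1+\<sigma>)))"
      by (rule ennreal_leI)
    also have "\<dots> = ennreal (2 * ((Aav f x)^2 / x powr (1+\<sigma>))) + ennreal (2 * ((uu f x)^2 / x powr (1+\<sigma>)))"
      by (rule ennreal_plus) auto
    also have "ennreal (2 * ((Aav f x)^2 / x powr (1+\<sigma>))) = 2 * ennreal ((Aav f x)^2 / x powr (1+\<sigma>))"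
      by (subst ennreal_mult') auto
    also have "ennreal (2 * ((uu f x)^2 / x powr (1+\<sigma>))) = 2 * ennreal ((uu f x)^2 / x powr (1+\<sigma>))"
      by (subst ennreal_mult') auto
    finally show "ennreal ((f x)^2 / x powr (1+\<sigma>)) * indicator {0<..b} x
      \<le> 2 * (ennreal ((Aav f x)^2 / x powr (1+\<sigma>)) * indicator {0<..b} x)
          + 2 * (ennreal ((uu f x)^2 / x powr (1+\<sigma>)) * indicator {0<..b} x)"
      by (auto split: split_indicator)
  qed
  also have "\<dots> = 2 * (\<integral>\<^sup>+x. ennreal ((Aav f x)^2 / x powr (1+\<sigma>)) * indicator {0<..b} x \<partial>lborel)
      + 2 * (\<integral>\<^sup>+x. ennreal ((uu f x)^2 / x powr (1+\<sigma>)) * indicator {0<..b} x \<partial>lborel)"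
    by (subst nn_integral_add) (auto simp: nn_integral_cmult)
  finally show ?thesis .
qed

lemma Hardy:
  assumes sg: "\<sigma> > 0"
  shows "(\<integral>\<^sup>+x. ennreal ((f x)^2 / x powr (1+\<sigma>)) * indicator {0<..b} x \<partial>lborel)
    \<le> ennreal ((8/\<sigma>^2 + 2) * (2/\<sigma>)) * (\<integral>\<^sup>+x. ennreal (uu f x * f' x / x powr \<sigma>) * indicator {0<..b} x \<partial>lborel)"
proof -
  let ?U = "(\<integral>\<^sup>+x. ennreal ((uu f x)^2 / x powr (1+\<sigma>)) * indicator {0<..b} x \<partial>lborel)"
  let ?T = "(\<integral>\<^sup>+x. ennreal (uu f x * f' x / x powr \<sigma>) * indicator {0<..b} x \<partial>lborel)"
  have "(\<integral>\<^sup>+x. ennreal ((f x)^2 / x powr (1+\<sigma>)) * indicator {0<..b} x \<partial>lborel)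
     \<le> 2 * (\<integral>\<^sup>+x. ennreal ((Aav f x)^2 / x powr (1+\<sigma>)) * indicator {0<..b} x \<partial>lborel) + 2 * ?U"
    by (rule R_bound)
  also have "\<dots> \<le> 2 * (ennreal (4/\<sigma>^2) * ?U) + 2 * ?U"
    by (intro add_mono mult_left_mono AA_bound[OF sg]) auto
  also have "\<dots> = (2 * ennreal (4/\<sigma>^2) + 2) * ?U" by (simp add: algebra_simps)
  also have "2 * ennreal (4/\<sigma>^2) + 2 = ennreal (8/\<sigma>^2 + 2)"
  proof -
    have "ennreal (8/\<sigma>^2 + 2) = ennreal (8/\<sigma>^2) + ennreal 2" by (rule ennreal_plus) auto
    also have "ennreal (8/\<sigma>^2) = ennreal (2 * (4/\<sigma>^2))" by simp
    also have "\<dots> = 2 * ennreal (4/\<sigma>^2)" by (subst ennreal_mult') auto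
    finally show ?thesis by simp
  qed
  also have "ennreal (8/\<sigma>^2 + 2) * ?U \<le> ennreal (8/\<sigma>^2 + 2) * (ennreal (2/\<sigma>) * ?T)"
    by (intro mult_left_mono U_bound[OF sg]) auto
  also have "\<dots> = (ennreal (8/\<sigma>^2 + 2) * ennreal (2/\<sigma>)) * ?T"
    by (simp only: mult.assoc)
  also have "ennreal (8/\<sigma>^2 + 2) * ennreal (2/\<sigma>) = ennreal ((8/\<sigma>^2 + 2) * (2/\<sigma>))"
    by (rule ennreal_mult[symmetric]) (use sg in auto)
  finally show ?thesis .
qed

end


theorem proposition4p3:
  fixes a \<sigma> :: real
  assumes "a > 0" and "\<sigma> > 0"
  shows "\<exists>C>0. \<forall>f :: real \<Rightarrow> real.
     smooth_periodic f \<and> (\<forall>x. f (- x) = f x) \<and> (\<forall>x. f x \<ge> 0) \<and> f 0 = 0 \<and>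
     (\<forall>x\<in>{0..<pi}. deriv f x \<ge> 0)
     \<longrightarrow>
     (let g = (\<lambda>x. - (Hop a f x * deriv f x) / x powr \<sigma>);
          LHSpos = (\<integral>\<^sup>+ x\<in>{0<..pi/2}. ennreal (max 0 (g x)) \<partial>lborel);
          LHSneg = (\<integral>\<^sup>+ x\<in>{0<..pi/2}. ennreal (max 0 (- g x)) \<partial>lborel);
          RHS = (\<integral>\<^sup>+ x\<in>{0<..pi/2}. ennreal ((f x)^2 / x powr (1 + \<sigma>)) \<partial>lborel)
      in LHSneg < \<infinity> \<and>
         ereal C * enn2ereal RHS \<le> enn2ereal LHSpos - enn2ereal LHSneg)"
proof -
  note a = assms(1) and sg = assms(2)
  define c where "c = a^2 / (2*pi*(4 + a^2))"
  define K where "K = (8/\<sigma>^2 + 2) * (2/\<sigma>)"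
  have c0: "c > 0" unfolding c_def using a by (auto intro!: divide_pos_pos mult_pos_pos add_pos_nonneg)
  have K0: "K > 0" unfolding K_def
  proof (rule mult_pos_pos)
    show "0 < 8/\<sigma>^2 + 2" using sg by (intro add_nonneg_pos) auto
    show "0 < 2/\<sigma>" using sg by simp
  qed
  show ?thesis
  proof (intro exI[of _ "c / K"] conjI allI impI)
    show "c / K > 0" using c0 K0 by simp
    fix f :: "real \<Rightarrow> real"
    assume H: "smooth_periodic f \<and> (\<forall>x. f (- x) = f x) \<and> (\<forall>x. f x \<ge> 0) \<and> f 0 = 0 \<and>
     (\<forall>x\<in>{0..<pi}. deriv f x \<ge> 0)"
    have sp: "smooth_periodic f" and ev: "\<forall>x. f (- x) = f x" and nn: "\<forall>x. f x \<ge> 0"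
      and f0: "f 0 = 0" and dmono: "\<forall>x\<in>{0..<pi}. deriv f x \<ge> 0" using H by auto
    have fd: "\<And>t. (f has_real_derivative deriv f t) (at t)" using f_deriv[OF sp ev nn f0 dmono] .
    have f'c: "\<And>t. isCont (deriv f) t" using df_cont[OF sp ev nn f0 dmono] .
    have fnn: "\<And>t. f t \<ge> 0" using nn by auto
    have fmono: "\<And>s t. 0 \<le> s \<Longrightarrow> s \<le> t \<Longrightarrow> t \<le> pi/2 \<Longrightarrow> f s \<le> f t"
      using f_mono[OF sp ev nn f0 dmono] by (meson order_trans pi_half_le_two pi_ge_two) 
    have f'nn: "\<And>t. 0 \<le> t \<Longrightarrow> t \<le> pi/2 \<Longrightarrow> deriv f t \<ge> 0"
    proof -
      fix t :: real assume "0 \<le> t" "t \<le> pi/2"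
      hence "t \<in> {0..<pi}" using pi_gt_zero by (auto; linarith)
      thus "deriv f t \<ge> 0" using dmono by blast
    qed
    note hyps = fd f'c f0 fnn fmono f'nn
    define g where "g = (\<lambda>x. - (Hop a f x * deriv f x) / x powr \<sigma>)"
    have gx: "g x \<ge> c * (uu f x * deriv f x / x powr \<sigma>)" "c * (uu f x * deriv f x / x powr \<sigma>) \<ge> 0"
      if x: "x \<in> {0<..pi/2}" for x
    proof -
      have x': "0 < x" "x \<le> pi/2" using x by auto
      have hx: "- Hop a f x \<ge> c * uu f x"
        using neg_Hop_ge[OF sp ev nn f0 dmono a x'] unfolding c_def uu_def Aav_def .
      have d: "deriv f x \<ge> 0" using f'nn x' by simp
      have u0: "uu f x \<ge> 0" using H_u_bounds[OF hyps x'] by simp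
      have "(c * uu f x) * deriv f x \<le> (- Hop a f x) * deriv f x" using hx d by (rule mult_right_mono)
      hence "(c * uu f x) * deriv f x / x powr \<sigma> \<le> (- Hop a f x) * deriv f x / x powr \<sigma>"
        by (intro divide_right_mono) auto
      thus "g x \<ge> c * (uu f x * deriv f x / x powr \<sigma>)" unfolding g_def by (simp add: mult.assoc)
      show "c * (uu f x * deriv f x / x powr \<sigma>) \<ge> 0" using c0 u0 d by simp
    qed
    let ?T = "(\<integral>\<^sup>+x. ennreal (uu f x * deriv f x / x powr \<sigma>) * indicator {0<..pi/2} x \<partial>lborel)"
    define LP where "LP = (\<integral>\<^sup>+ x\<in>{0<..pi/2}. ennreal (max 0 (g x)) \<partial>lborel)"
    define LN where "LN = (\<integral>\<^sup>+ x\<in>{0<..pi/2}. ennreal (max 0 (- g x)) \<partial>lborel)"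
    define R where "R = (\<integral>\<^sup>+ x\<in>{0<..pi/2}. ennreal ((f x)^2 / x powr (1 + \<sigma>)) \<partial>lborel)"
    have LN0: "LN = 0"
    proof -
      have z: "ennreal (max 0 (- g x)) * indicator {0<..pi/2} x = 0" for x
      proof (cases "x \<in> {0<..pi/2}")
        case True
        have "g x \<ge> 0" using gx[OF True] by linarith
        thus ?thesis by simp
      qed simp
      show ?thesis unfolding LN_def z by simp
    qed
    have LP: "ennreal c * ?T \<le> LP"
    proof -
      have m1[measurable]: "uu f \<in> borel_measurable borel" using H_meas(2)[OF hyps] .
      have m2[measurable]: "deriv f \<in> borel_measurable borel" using H_f_meas(2)[OF hyps] .
      have "ennreal c * ?T = (\<integral>\<^sup>+x. ennreal c * (ennreal (uu f x * deriv f x / x powr \<sigma>) * indicator {0<..pi/2} x) \<partial>lborel)"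
        by (rule nn_integral_cmult[symmetric]) measurable
      also have "\<dots> \<le> LP" unfolding LP_def
      proof (intro nn_integral_mono)
        fix x show "ennreal c * (ennreal (uu f x * deriv f x / x powr \<sigma>) * indicator {0<..pi/2} x)
            \<le> ennreal (max 0 (g x)) * indicator {0<..pi/2} x"
        proof (cases "x \<in> {0<..pi/2}")
          case True
          have "ennreal c * ennreal (uu f x * deriv f x / x powr \<sigma>) = ennreal (c * (uu f x * deriv f x / x powr \<sigma>))"
          proof (rule ennreal_mult[symmetric])
            show "0 \<le> c" using c0 by simp
            have x': "0 < x" "x \<le> pi/2" using True by auto
            have "0 \<le> uu f x" using H_u_bounds(1)[OF hyps x'] .
            moreover have "0 \<le> deriv f x" using f'nn x' by simp
            ultimately show "0 \<le> uu f x * deriv f x / x powr \<sigma>" by simp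
          qed
          also have "\<dots> \<le> ennreal (max 0 (g x))" using gx(1)[OF True] by (intro ennreal_leI) auto
          finally show ?thesis using True by (simp add: mult.assoc[symmetric])
        qed simp
      qed
      finally show ?thesis .
    qed
    have RH: "R \<le> ennreal K * ?T"
      unfolding R_def K_def using Hardy[OF hyps sg] by simp
    have "ennreal (c / K) * R \<le> ennreal (c / K) * (ennreal K * ?T)" by (intro mult_left_mono RH) auto
    also have "\<dots> = ennreal (c / K * K) * ?T"
      by (subst mult.assoc[symmetric], subst ennreal_mult[symmetric]) (use c0 K0 in auto)
    also have "c / K * K = c" using K0 by simp
    finally have key: "ennreal (c / K) * R \<le> LP" using LP by simp
    have "ereal (c / K) * enn2ereal R = enn2ereal (ennreal (c / K) * R)"
      using c0 K0 by (simp add: times_ennreal.rep_eq)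
    also have "\<dots> \<le> enn2ereal LP" using key by (simp add: less_eq_ennreal.rep_eq)
    finally have fin: "ereal (c / K) * enn2ereal R \<le> enn2ereal LP - enn2ereal LN"
      using LN0 by (simp add: zero_ennreal.rep_eq)
    show "let g = (\<lambda>x. - (Hop a f x * deriv f x) / x powr \<sigma>);
          LHSpos = (\<integral>\<^sup>+ x\<in>{0<..pi/2}. ennreal (max 0 (g x)) \<partial>lborel);
          LHSneg = (\<integral>\<^sup>+ x\<in>{0<..pi/2}. ennreal (max 0 (- g x)) \<partial>lborel);
          RHS = (\<integral>\<^sup>+ x\<in>{0<..pi/2}. ennreal ((f x)^2 / x powr (1 + \<sigma>)) \<partial>lborel)
      in LHSneg < \<infinity> \<and>
         ereal (c / K) * enn2ereal RHS \<le> enn2ereal LHSpos - enn2ereal LHSneg"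
      unfolding Let_def g_def[symmetric] LP_def[symmetric] LN_def[symmetric] R_def[symmetric]
      using fin LN0 by simp
  qed
qed


end
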